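(* Let $\mathcal{P}_1,\mathcal{P}_2$ be finite posets with $p_j=|\mathcal{P}_j|$, such that $\mathcal{C}(\mathcal{P}_j)\subset\mathbb{R}^{p_j}$ has $q_j$ extremal rays for $j=1,2$, and suppose $\mathcal{C}(\mathcal{P}_2)$ is simplicial. Then $r$ is a typical ND rank in $\mathcal{C}(\mathcal{P}_1)\otimes\mathcal{C}(\mathcal{P}_2)$ if and only if $\min(p_1,p_2)\le r\le\min(q_1,q_2)$.
   Context: For a finite poset $\mathcal{Q}$, the order cone $\mathcal{C}(\mathcal{Q})$ is the set of $\mathbf{f}\in\mathbb{R}^{\mathcal{Q}}$ with $f_x\ge0$ and $f_x\le f_y$ whenever $x\preceq y$; a cone in $\mathbb{R}^p$ is simplicial if it is the conical hull of $p$ linearly independent vectors. $\mathcal{N}_{\le r}$ is the set of matrices $\sum_{i=1}^r\mathbf{a}_i\mathbf{b}_i^\intercal$ with $\mathbf{a}_i\in\mathcal{C}(\mathcal{P}_1)$, $\mathbf{b}_i\in\mathcal{C}(\mathcal{P}_2)$, and $\mathcal{N}_r=\mathcal{N}_{\le r}\setminus\mathcal{N}_{\le r-1}$. A number $r$ is a typical ND rank if $\mathcal{N}_r$ has non-empty interior in $\mathbb{R}^{p_1\times p_2}$. *)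

theory Defs
  imports "HOL-Analysis.Analysis"
begin

definition order_cone :: "('a::finite \<times> 'a) set \<Rightarrow> (real^'a) set" where
  "order_cone R = {f. (\<forall>x. 0 \<le> f $ x) \<and> (\<forall>x y. (x, y) \<in> R \<longrightarrow> f $ x \<le> f $ y)}"

definition ray :: "'v::real_vector \<Rightarrow> 'v set" where
  "ray v = {t *\<^sub>R v | t. t \<ge> 0}"

definition extremal_rays :: "'v::real_vector set \<Rightarrow> 'v set set" where
  "extremal_rays C = {R. \<exists>v. v \<noteq> 0 \<and> R = ray v \<and> R face_of C}"

definition conical_hull :: "'v::real_vector set \<Rightarrow> 'v set" where
  "conical_hull S = {(\<Sum>v\<in>S. c v *\<^sub>R v) | c. \<forall>v\<in>S. 0 \<le> c v}"

definition simplicial :: "'v::euclidean_space set \<Rightarrow> bool" where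
  "simplicial C \<longleftrightarrow> (\<exists>S. independent S \<and> finite S \<and> card S = DIM('v) \<and> C = conical_hull S)"

definition outer :: "real^'a \<Rightarrow> real^'b \<Rightarrow> real^'b^'a" where
  "outer a b = (\<chi> i j. a $ i * b $ j)"

definition ND_le :: "('a::finite \<times> 'a) set \<Rightarrow> ('b::finite \<times> 'b) set \<Rightarrow> nat \<Rightarrow> (real^'b^'a) set" where
  "ND_le R1 R2 r = {(\<Sum>i<r. outer (a i) (b i)) | a b.
      (\<forall>i<r. a i \<in> order_cone R1 \<and> b i \<in> order_cone R2)}"

definition ND_eq :: "('a::finite \<times> 'a) set \<Rightarrow> ('b::finite \<times> 'b) set \<Rightarrow> nat \<Rightarrow> (real^'b^'a) set" where
  "ND_eq R1 R2 r = (if r = 0 then ND_le R1 R2 0 else ND_le R1 R2 r - ND_le R1 R2 (r - 1))"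

definition typical_ND_rank :: "('a::finite \<times> 'a) set \<Rightarrow> ('b::finite \<times> 'b) set \<Rightarrow> nat \<Rightarrow> bool" where
  "typical_ND_rank R1 R2 r \<longleftrightarrow> interior (ND_eq R1 R2 r) \<noteq> {}"

end

theory Submission
  imports Defs
begin


lemma outer_nth[simp]: "outer a b $ i $ j = a $ i * b $ j"
  by (simp add: outer_def)

lemma outer_add_left: "outer (x + y) z = outer x z + outer y z"
  by (simp add: vec_eq_iff algebra_simps)
lemma outer_add_right: "outer z (x + y) = outer z x + outer z y"
  by (simp add: vec_eq_iff algebra_simps)
lemma outer_scale_left: "outer (c *\<^sub>R x) z = c *\<^sub>R outer x z"
  by (simp add: vec_eq_iff algebra_simps)
lemma outer_scale_right: "outer z (c *\<^sub>R x) = c *\<^sub>R outer z x"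
  by (simp add: vec_eq_iff algebra_simps)
lemma outer_zero_left[simp]: "outer 0 z = 0"
  by (simp add: vec_eq_iff)
lemma outer_zero_right[simp]: "outer z 0 = 0"
  by (simp add: vec_eq_iff)
lemma outer_sum_left: "outer (\<Sum>i\<in>I. f i) z = (\<Sum>i\<in>I. outer (f i) z)"
  by (induct I rule: infinite_finite_induct) (auto simp: outer_add_left)
lemma outer_sum_right: "outer z (\<Sum>i\<in>I. f i) = (\<Sum>i\<in>I. outer z (f i))"
  by (induct I rule: infinite_finite_induct) (auto simp: outer_add_right)

lemma norm_column_le: "norm (column j X) \<le> norm (X :: real^'b^'a)"
  by (rule norm_le_componentwise_cart) (simp add: column_def component_le_norm_cart)

section \<open>Order cone\<close>

lemma order_cone_nonneg: "f \<in> order_cone R \<Longrightarrow> 0 \<le> f $ x"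
  by (simp add: order_cone_def)
lemma zero_in_order_cone[simp]: "0 \<in> order_cone R"
  by (simp add: order_cone_def)
lemma order_cone_add: "f \<in> order_cone R \<Longrightarrow> g \<in> order_cone R \<Longrightarrow> f + g \<in> order_cone R"
  by (fastforce simp: order_cone_def intro: add_mono)
lemma order_cone_scale: "f \<in> order_cone R \<Longrightarrow> 0 \<le> c \<Longrightarrow> c *\<^sub>R f \<in> order_cone R"
  by (auto simp: order_cone_def intro: mult_left_mono)
lemma order_cone_sum: "(\<And>i. i \<in> I \<Longrightarrow> f i \<in> order_cone R) \<Longrightarrow> (\<Sum>i\<in>I. f i) \<in> order_cone R"
  by (induct I rule: infinite_finite_induct) (auto intro: order_cone_add)
lemma order_cone_comb: "(\<And>i. i \<in> I \<Longrightarrow> f i \<in> order_cone R) \<Longrightarrow> (\<And>i. i \<in> I \<Longrightarrow> 0 \<le> c i)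
   \<Longrightarrow> (\<Sum>i\<in>I. c i *\<^sub>R f i) \<in> order_cone R"
  by (rule order_cone_sum) (auto intro: order_cone_scale)

lemma closed_order_cone: "closed (order_cone (R :: ('a::finite \<times> 'a) set))"
proof -
  have "order_cone R = (\<Inter>x. {f. 0 \<le> f $ x}) \<inter> (\<Inter>p\<in>R. {f. f $ fst p \<le> f $ snd p})"
    by (auto simp: order_cone_def; fastforce)
  moreover have "closed {f::real^'a. 0 \<le> f $ x}" for x
    by (rule closed_Collect_le) (auto intro: continuous_intros)
  moreover have "closed {f::real^'a. f $ fst p \<le> f $ snd p}" for p
    by (rule closed_Collect_le) (auto intro: continuous_intros)
  ultimately show ?thesis by (simp only:) (intro closed_Int closed_INT; simp)
qed

section \<open>Conical hulls\<close>

lemma conical_hullI: "(\<And>v. v \<in> S \<Longrightarrow> 0 \<le> c v) \<Longrightarrow> (\<Sum>v\<in>S. c v *\<^sub>R v) \<in> conical_hull S"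
  unfolding conical_hull_def by blast

lemma conical_hullE: "x \<in> conical_hull S \<Longrightarrow> (\<And>c. (\<And>v. v \<in> S \<Longrightarrow> 0 \<le> c v) \<Longrightarrow> x = (\<Sum>v\<in>S. c v *\<^sub>R v) \<Longrightarrow> P) \<Longrightarrow> P"
  unfolding conical_hull_def by blast

lemma conical_hull_zero: "0 \<in> conical_hull S"
  using conical_hullI[of S "\<lambda>_. 0"] by simp

lemma conical_hull_add: "x \<in> conical_hull S \<Longrightarrow> y \<in> conical_hull S \<Longrightarrow> x + y \<in> conical_hull S"
  apply (elim conical_hullE)
  subgoal for c d
    using conical_hullI[of S "\<lambda>v. c v + d v"] by (simp add: scaleR_add_left sum.distrib)
  done

lemma conical_hull_scale: "x \<in> conical_hull S \<Longrightarrow> 0 \<le> t \<Longrightarrow> t *\<^sub>R x \<in> conical_hull S"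
  apply (elim conical_hullE)
  subgoal for c
    using conical_hullI[of S "\<lambda>v. t * c v"] by (simp add: scaleR_sum_right)
  done

lemma conical_hull_base: "finite S \<Longrightarrow> v \<in> S \<Longrightarrow> v \<in> conical_hull S"
proof -
  assume a: "finite S" "v \<in> S"
  have "(\<Sum>w\<in>S. (if w = v then 1 else 0) *\<^sub>R w) = v"
  proof -
    have "(\<Sum>w\<in>S. (if w = v then 1 else 0) *\<^sub>R w) = (\<Sum>w\<in>S. if w = v then w else 0)"
      by (rule sum.cong) auto
    also have "\<dots> = v" using a by (simp only: sum.delta) simp
    finally show ?thesis .
  qed
  moreover have "(\<Sum>w\<in>S. (if w = v then 1 else 0) *\<^sub>R w) \<in> conical_hull S"
    by (rule conical_hullI) simp
  ultimately show ?thesis by (simp only:)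
qed

lemma conical_hull_mono:
  assumes T: "finite T" and ST: "S \<subseteq> T" shows "conical_hull S \<subseteq> conical_hull T"
proof
  fix x assume x: "x \<in> conical_hull S"
  then obtain c where c: "\<And>v. v \<in> S \<Longrightarrow> 0 \<le> c v" "x = (\<Sum>v\<in>S. c v *\<^sub>R v)" by (metis conical_hullE)
  have "x = (\<Sum>v\<in>T. (if v \<in> S then c v else 0) *\<^sub>R v)"
  proof -
    have "(\<Sum>v\<in>T. (if v \<in> S then c v else 0) *\<^sub>R v) = (\<Sum>v\<in>T. if v \<in> S then c v *\<^sub>R v else 0)"
      by (rule sum.cong) auto
    also have "\<dots> = (\<Sum>v\<in>S. c v *\<^sub>R v)"
      using sum.inter_restrict[OF T, of "\<lambda>v. c v *\<^sub>R v" S] ST by (metis Int_absorb1)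
    finally show ?thesis using c(2) by simp
  qed
  moreover have "(\<Sum>v\<in>T. (if v \<in> S then c v else 0) *\<^sub>R v) \<in> conical_hull T"
    by (rule conical_hullI) (simp add: c(1))
  ultimately show "x \<in> conical_hull T" by simp
qed

lemma conical_hull_sum: "finite I \<Longrightarrow> (\<And>i. i \<in> I \<Longrightarrow> f i \<in> conical_hull S) \<Longrightarrow> (\<Sum>i\<in>I. f i) \<in> conical_hull S"
  by (induct I rule: finite_induct) (auto intro: conical_hull_add conical_hull_zero)

lemma conical_hull_subset_order_cone: "S \<subseteq> order_cone R \<Longrightarrow> conical_hull S \<subseteq> order_cone R"
  by (auto elim!: conical_hullE intro!: order_cone_comb)

lemma conical_hull_subset_span: "conical_hull S \<subseteq> span S"
proof
  fix x assume "x \<in> conical_hull S"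
  then obtain c where "x = (\<Sum>v\<in>S. c v *\<^sub>R v)" by (metis conical_hullE)
  then show "x \<in> span S" by (simp add: span_sum span_scale span_base)
qed



section \<open>Rays\<close>

lemma ray_iff: "x \<in> ray v \<longleftrightarrow> (\<exists>t\<ge>0. x = t *\<^sub>R v)"
  by (auto simp: ray_def)

lemma ray_self: "v \<in> ray v"
  unfolding ray_iff by (rule exI[of _ 1]) simp

lemma ray_scale: "0 < c \<Longrightarrow> ray (c *\<^sub>R v) = ray v"
proof (intro set_eqI iffI)
  fix x assume c: "0 < c"
  { assume "x \<in> ray (c *\<^sub>R v)" then obtain t where "t \<ge> 0" "x = t *\<^sub>R c *\<^sub>R v" unfolding ray_iff by blast
    then show "x \<in> ray v" unfolding ray_iff using c by (intro exI[of _ "t * c"]) simp }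
  { assume "x \<in> ray v" then obtain t where "t \<ge> 0" "x = t *\<^sub>R v" unfolding ray_iff by blast
    then show "x \<in> ray (c *\<^sub>R v)" unfolding ray_iff using c by (intro exI[of _ "t / c"]) simp }
qed

lemma ray_of_member: "x \<in> ray v \<Longrightarrow> x \<noteq> 0 \<Longrightarrow> ray x = ray v"
proof -
  assume "x \<in> ray v" "x \<noteq> 0"
  then obtain t where t: "t \<ge> 0" "x = t *\<^sub>R v" unfolding ray_iff by blast
  with \<open>x \<noteq> 0\<close> have "t > 0" by (cases "t = 0") auto
  then show ?thesis using t ray_scale by simp
qed

lemma convex_ray: "convex (ray v)"
proof (rule convexI)
  fix x y and u w :: real assume "x \<in> ray v" "y \<in> ray v" and uw: "0 \<le> u" "0 \<le> w" "u + w = 1"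
  then obtain s t where "s \<ge> 0" "t \<ge> 0" "x = s *\<^sub>R v" "y = t *\<^sub>R v" unfolding ray_iff by blast
  then show "u *\<^sub>R x + w *\<^sub>R y \<in> ray v"
    unfolding ray_iff using uw by (intro exI[of _ "u * s + w * t"]) (simp add: scaleR_add_left)
qed

lemma face_ray_split:
  assumes face: "ray v face_of C" and x: "x \<in> C" and y: "y \<in> C" and v: "v = x + y"
    and sc: "\<And>z. z \<in> C \<Longrightarrow> 2 *\<^sub>R z \<in> C"
  shows "x \<in> ray v"
proof (cases "x = y")
  case True
  then have "x = (1/2) *\<^sub>R v" using v by (simp add: scaleR_2[symmetric])
  then show ?thesis unfolding ray_iff by (intro exI[of _ "1/2"]) simp
next
  case False
  have "v = midpoint (2 *\<^sub>R x) (2 *\<^sub>R y)" using v by (simp add: midpoint_def scaleR_add_right[symmetric])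
  moreover have "2 *\<^sub>R x \<noteq> 2 *\<^sub>R y" using False by simp
  ultimately have "v \<in> open_segment (2 *\<^sub>R x) (2 *\<^sub>R y)" by simp
  then have "2 *\<^sub>R x \<in> ray v" using face sc[OF x] sc[OF y] ray_self[of v] unfolding face_of_def by blast
  then obtain t where "t \<ge> 0" "2 *\<^sub>R x = t *\<^sub>R v" unfolding ray_iff by blast
  note eq = this(2)
  have "x = (1/2) *\<^sub>R (2 *\<^sub>R x)" by simp
  also have "\<dots> = (1/2) *\<^sub>R (t *\<^sub>R v)" using eq by simp
  also have "\<dots> = (t/2) *\<^sub>R v" by simp
  finally have "x = (t/2) *\<^sub>R v" .
  then show ?thesis unfolding ray_iff using \<open>t \<ge> 0\<close> by (intro exI[of _ "t/2"]) simp
qed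

lemma closed_sum_gen:
  assumes "finite I" "\<And>i. i \<in> I \<Longrightarrow> x i \<in> C" "\<And>z w. z \<in> C \<Longrightarrow> w \<in> C \<Longrightarrow> z + w \<in> C" "0 \<in> C"
  shows "(\<Sum>i\<in>I. x i) \<in> C"
  using assms by (induct I rule: finite_induct) auto

lemma face_ray_sum:
  assumes face: "ray v face_of C" and fin: "finite K" and xs: "\<And>k. k \<in> K \<Longrightarrow> x k \<in> C"
    and v: "v = (\<Sum>k\<in>K. x k)"
    and sc: "\<And>z. z \<in> C \<Longrightarrow> 2 *\<^sub>R z \<in> C" and add: "\<And>z w. z \<in> C \<Longrightarrow> w \<in> C \<Longrightarrow> z + w \<in> C"
    and zero: "0 \<in> C"
    and k: "k \<in> K"
  shows "x k \<in> ray v"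
proof -
  have rest: "(\<Sum>j\<in>K-{k}. x j) \<in> C"
    using fin xs add zero by (intro closed_sum_gen) auto
  show ?thesis
    using face_ray_split[OF face xs[OF k] _ _ sc] rest v sum.remove[OF fin k, of x] by simp
qed

lemma orthant_sum_zero:
  fixes x :: "'i \<Rightarrow> real^'n"
  assumes fin: "finite I" and nn: "\<And>i k. i \<in> I \<Longrightarrow> 0 \<le> x i $ k" and s: "(\<Sum>i\<in>I. x i) = 0" and i: "i \<in> I"
  shows "x i = 0"
proof -
  have "x i $ k = 0" for k
  proof -
    have "(\<Sum>j\<in>I. x j $ k) = 0" using s by (metis sum_component zero_index)
    then show ?thesis using sum_nonneg_eq_0_iff[OF fin, of "\<lambda>j. x j $ k"] nn i by blast
  qed
  then show ?thesis by (simp add: vec_eq_iff)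
qed

lemma orthant_add_zero:
  fixes x y :: "real^'n"
  assumes "\<And>k. 0 \<le> x $ k" "\<And>k. 0 \<le> y $ k" "x + y = 0"
  shows "x = 0"
proof -
  have "x $ k = 0" for k
  proof -
    have "(x + y) $ k = 0" using assms(3) by simp
    then have "x $ k + y $ k = 0" by simp
    then show ?thesis using assms(1,2)[of k] by linarith
  qed
  then show ?thesis by (simp add: vec_eq_iff)
qed



definition minimal_gen :: "'v::real_vector set \<Rightarrow> bool" where
  "minimal_gen G \<longleftrightarrow> (\<forall>g\<in>G. g \<notin> conical_hull (G - {g}))"

definition orth_cone :: "(real^'n) set \<Rightarrow> bool" where
  "orth_cone C \<longleftrightarrow> (\<forall>x\<in>C. \<forall>k. 0 \<le> x $ k)"

lemma minimal_gen_nonzero: "minimal_gen G \<Longrightarrow> g \<in> G \<Longrightarrow> g \<noteq> 0"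
  using conical_hull_zero unfolding minimal_gen_def by metis

lemma key_lemma:
  fixes G :: "(real^'n) set"
  assumes fin: "finite G" and orth: "orth_cone (conical_hull G)" and mg: "minimal_gen G"
    and g: "g \<in> G" and eq: "t *\<^sub>R g = (\<Sum>h\<in>G. \<nu> h *\<^sub>R h)" and nn: "\<And>h. h \<in> G \<Longrightarrow> 0 \<le> \<nu> h"
    and h: "h \<in> G" "h \<noteq> g"
  shows "\<nu> h = 0"
proof -
  define w where "w = (\<Sum>h\<in>G-{g}. \<nu> h *\<^sub>R h)"
  have finr: "finite (G - {g})" using fin by simp
  have sumeq: "(\<Sum>h\<in>G. \<nu> h *\<^sub>R h) = \<nu> g *\<^sub>R g + w"
    unfolding w_def using sum.remove[OF fin g] by simp
  have wC: "w \<in> conical_hull (G - {g})" unfolding w_def by (rule conical_hullI) (simp add: nn)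
  have sub: "conical_hull (G - {g}) \<subseteq> conical_hull G" using conical_hull_mono[OF fin] by blast
  have gnot: "g \<notin> conical_hull (G - {g})" using mg g unfolding minimal_gen_def by blast
  show ?thesis
  proof (cases "\<nu> g < t")
    case True
    have e: "(t - \<nu> g) *\<^sub>R g = w" using eq sumeq by (simp add: scaleR_diff_left algebra_simps)
    have "(1 / (t - \<nu> g)) *\<^sub>R w = (1 / (t - \<nu> g)) *\<^sub>R ((t - \<nu> g) *\<^sub>R g)" using e by simp
    also have "\<dots> = g" using True by simp
    finally have "g = (1 / (t - \<nu> g)) *\<^sub>R w" by simp
    moreover have "(1 / (t - \<nu> g)) *\<^sub>R w \<in> conical_hull (G - {g})"
      using True wC by (intro conical_hull_scale) auto
    ultimately show ?thesis using gnot by simp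
  next
    case False
    have z: "(\<nu> g - t) *\<^sub>R g + w = 0" using eq sumeq by (simp add: scaleR_diff_left algebra_simps)
    have "(\<nu> g - t) *\<^sub>R g \<in> conical_hull G"
      using False by (intro conical_hull_scale conical_hull_base[OF fin g]) auto
    note gC = this
    have wG: "w \<in> conical_hull G" using wC sub by blast
    have "w = 0"
    proof (rule orthant_add_zero[of w "(\<nu> g - t) *\<^sub>R g"])
      show "\<And>k. 0 \<le> w $ k" using wG orth unfolding orth_cone_def by blast
      show "\<And>k. 0 \<le> ((\<nu> g - t) *\<^sub>R g) $ k" using gC orth unfolding orth_cone_def by blast
      show "w + (\<nu> g - t) *\<^sub>R g = 0" using z by (simp add: add.commute)
    qed
    have "\<nu> h *\<^sub>R h = 0"
    proof (rule orthant_sum_zero[OF finr, of "\<lambda>h. \<nu> h *\<^sub>R h"])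
      show "(\<Sum>h\<in>G - {g}. \<nu> h *\<^sub>R h) = 0" using \<open>w = 0\<close> w_def by simp
      show "h \<in> G - {g}" using h by simp
      fix i k assume "i \<in> G - {g}"
      then have "\<nu> i *\<^sub>R i \<in> conical_hull G" using nn by (intro conical_hull_scale conical_hull_base[OF fin]) auto
      then show "0 \<le> (\<nu> i *\<^sub>R i) $ k" using orth unfolding orth_cone_def by blast
    qed
    then show ?thesis using minimal_gen_nonzero[OF mg h(1)] by simp
  qed
qed

lemma ray_face_of_hull:
  fixes G :: "(real^'n) set"
  assumes fin: "finite G" and orth: "orth_cone (conical_hull G)" and mg: "minimal_gen G"
    and g: "g \<in> G"
  shows "ray g face_of conical_hull G"
  unfolding face_of_def
proof (intro conjI ballI impI)
  show "ray g \<subseteq> conical_hull G"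
    using conical_hull_base[OF fin g] by (auto simp: ray_iff intro: conical_hull_scale)
  show "convex (ray g)" by (rule convex_ray)
  fix a b x assume a: "a \<in> conical_hull G" and b: "b \<in> conical_hull G" and x: "x \<in> ray g"
    and seg: "x \<in> open_segment a b"
  obtain \<alpha> where \<alpha>: "\<And>v. v \<in> G \<Longrightarrow> 0 \<le> \<alpha> v" "a = (\<Sum>v\<in>G. \<alpha> v *\<^sub>R v)" using a by (metis conical_hullE)
  obtain \<beta> where \<beta>: "\<And>v. v \<in> G \<Longrightarrow> 0 \<le> \<beta> v" "b = (\<Sum>v\<in>G. \<beta> v *\<^sub>R v)" using b by (metis conical_hullE)
  obtain u where u: "0 < u" "u < 1" "x = (1 - u) *\<^sub>R a + u *\<^sub>R b" using seg unfolding in_segment by blast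
  obtain t where t: "x = t *\<^sub>R g" using x unfolding ray_iff by blast
  have "t *\<^sub>R g = (\<Sum>v\<in>G. ((1 - u) * \<alpha> v + u * \<beta> v) *\<^sub>R v)"
    using t u(3) \<alpha>(2) \<beta>(2) by (simp add: scaleR_sum_right sum.distrib scaleR_add_left)
  then have z: "(1 - u) * \<alpha> v + u * \<beta> v = 0" if "v \<in> G" "v \<noteq> g" for v
    using key_lemma[OF fin orth mg g, of t "\<lambda>v. (1 - u) * \<alpha> v + u * \<beta> v" v] that u \<alpha>(1) \<beta>(1) by auto
  have ab0: "\<alpha> v = 0 \<and> \<beta> v = 0" if "v \<in> G" "v \<noteq> g" for v
  proof -
    have "0 \<le> (1 - u) * \<alpha> v" "0 \<le> u * \<beta> v" using u \<alpha>(1) \<beta>(1) that by auto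
    then have "(1 - u) * \<alpha> v = 0" "u * \<beta> v = 0" using z[OF that] by linarith+
    then show ?thesis using u by auto
  qed
  have "a = \<alpha> g *\<^sub>R g"
  proof -
    have "a = \<alpha> g *\<^sub>R g + (\<Sum>v\<in>G-{g}. \<alpha> v *\<^sub>R v)" using \<alpha>(2) sum.remove[OF fin g] by simp
    also have "(\<Sum>v\<in>G-{g}. \<alpha> v *\<^sub>R v) = 0" using ab0 by (intro sum.neutral) auto
    finally show ?thesis by simp
  qed
  then show "a \<in> ray g" unfolding ray_iff using \<alpha>(1)[OF g] by blast
  have "b = \<beta> g *\<^sub>R g"
  proof -
    have "b = \<beta> g *\<^sub>R g + (\<Sum>v\<in>G-{g}. \<beta> v *\<^sub>R v)" using \<beta>(2) sum.remove[OF fin g] by simp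
    also have "(\<Sum>v\<in>G-{g}. \<beta> v *\<^sub>R v) = 0" using ab0 by (intro sum.neutral) auto
    finally show ?thesis by simp
  qed
  then show "b \<in> ray g" unfolding ray_iff using \<beta>(1)[OF g] by blast
qed

lemma inj_on_ray:
  fixes G :: "(real^'n) set"
  assumes fin: "finite G" and orth: "orth_cone (conical_hull G)" and mg: "minimal_gen G"
  shows "inj_on ray G"
proof (rule inj_onI, rule ccontr)
  fix g h assume g: "g \<in> G" and h: "h \<in> G" and eq: "ray g = ray h" and ne: "g \<noteq> h"
  have "h \<in> ray g" using eq ray_self[of h] by simp
  then obtain t where "h = t *\<^sub>R g" unfolding ray_iff by blast
  then have "t *\<^sub>R g = (\<Sum>v\<in>G. (if v = h then 1 else 0) *\<^sub>R v)"
    using fin h by (simp add: if_distrib[of "\<lambda>c. c *\<^sub>R _"] cong: if_cong)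
  then have "(if h = h then 1 else 0::real) = 0"
    by (rule key_lemma[OF fin orth mg g, of t "\<lambda>v. if v = h then 1 else 0" h]) (use h ne in auto)
  then show False by simp
qed

lemma extremal_rays_hull:
  fixes G :: "(real^'n) set"
  assumes fin: "finite G" and orth: "orth_cone (conical_hull G)" and mg: "minimal_gen G"
  shows "extremal_rays (conical_hull G) = ray ` G"
proof (intro set_eqI iffI)
  fix R assume "R \<in> ray ` G"
  then obtain g where "g \<in> G" "R = ray g" by blast
  then show "R \<in> extremal_rays (conical_hull G)"
    unfolding extremal_rays_def using minimal_gen_nonzero[OF mg] ray_face_of_hull[OF fin orth mg] by blast
next
  fix R assume "R \<in> extremal_rays (conical_hull G)"
  then obtain v where v: "v \<noteq> 0" "R = ray v" "ray v face_of conical_hull G" unfolding extremal_rays_def by blast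
  have "v \<in> conical_hull G" using v(3) ray_self[of v] face_of_imp_subset by blast
  then obtain c where c: "\<And>h. h \<in> G \<Longrightarrow> 0 \<le> c h" "v = (\<Sum>h\<in>G. c h *\<^sub>R h)" by (metis conical_hullE)
  have inray: "c h *\<^sub>R h \<in> ray v" if "h \<in> G" for h
    by (rule face_ray_sum[OF v(3) fin _ c(2) _ _ conical_hull_zero that])
       (auto intro: conical_hull_scale conical_hull_add conical_hull_base[OF fin] c(1))
  obtain h where h: "h \<in> G" "c h *\<^sub>R h \<noteq> 0"
    using c(2) v(1) by (metis (no_types, lifting) sum.neutral)
  then have "c h > 0" using c(1)[OF h(1)] by (cases "c h = 0") auto
  have "ray (c h *\<^sub>R h) = ray v" using ray_of_member[OF inray[OF h(1)] h(2)] .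
  then have "R = ray h" using ray_scale[OF \<open>c h > 0\<close>, of h] v(2) by simp
  then show "R \<in> ray ` G" using h(1) by blast
qed

lemma card_extremal_rays_hull:
  fixes G :: "(real^'n) set"
  assumes fin: "finite G" and orth: "orth_cone (conical_hull G)" and mg: "minimal_gen G"
  shows "card (extremal_rays (conical_hull G)) = card G"
  using extremal_rays_hull[OF assms] card_image[OF inj_on_ray[OF assms]] by simp



lemma convex_order_cone: "convex (order_cone R)"
  unfolding convex_def by (auto intro!: order_cone_add order_cone_scale)

lemma orth_order_cone: "orth_cone (order_cone R)"
  unfolding orth_cone_def by (auto simp: order_cone_nonneg)

lemma axis_inner: "axis i (1::real) \<bullet> f = f $ i"
  by (simp add: inner_commute inner_axis)

lemma polyhedron_order_cone: "polyhedron (order_cone (R :: ('a::finite \<times> 'a) set))"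
proof -
  let ?F = "(\<lambda>x. {f::real^'a. (- axis x 1) \<bullet> f \<le> 0}) ` UNIV \<union>
            (\<lambda>p. {f::real^'a. (axis (fst p) 1 - axis (snd p) 1) \<bullet> f \<le> 0}) ` R"
  have "order_cone R = \<Inter> ?F"
  proof (intro set_eqI iffI)
    fix f assume f: "f \<in> order_cone R"
    show "f \<in> \<Inter> ?F"
    proof (rule InterI)
      fix S assume "S \<in> ?F"
      then show "f \<in> S"
      proof (elim UnE imageE)
        fix x assume "S = {f::real^'a. (- axis x 1) \<bullet> f \<le> 0}"
        then show "f \<in> S" using f by (simp add: inner_minus_left axis_inner order_cone_def)
      next
        fix p assume "S = {f::real^'a. (axis (fst p) 1 - axis (snd p) 1) \<bullet> f \<le> 0}" "p \<in> R"
        then show "f \<in> S" using f by (cases p) (simp add: inner_diff_left axis_inner order_cone_def)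
      qed
    qed
  next
    fix f assume f: "f \<in> \<Inter> ?F"
    have "f \<in> {f::real^'a. (- axis x 1) \<bullet> f \<le> 0}" for x using f by blast
    then have a: "0 \<le> f $ x" for x by (simp add: inner_minus_left axis_inner)
    have "f \<in> {f::real^'a. (axis (fst p) 1 - axis (snd p) 1) \<bullet> f \<le> 0}" if "p \<in> R" for p using f that by blast
    then have b: "f $ x \<le> f $ y" if "(x, y) \<in> R" for x y using that[THEN \<open>\<And>p. p \<in> R \<Longrightarrow> _\<close>]
      by (simp add: inner_diff_left axis_inner)
    show "f \<in> order_cone R" using a b by (simp add: order_cone_def)
  qed
  moreover have "polyhedron (\<Inter> ?F)"
    by (rule polyhedron_Inter) (auto simp del: inner_minus_left intro: polyhedron_halfspace_le)
  ultimately show ?thesis by simp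
qed

definition base :: "('a::finite \<times> 'a) set \<Rightarrow> (real^'a) set" where
  "base R = order_cone R \<inter> {f. (\<chi> x. 1) \<bullet> f = 1}"

lemma ones_inner: "(\<chi> x. (1::real)) \<bullet> (f::real^'a::finite) = (\<Sum>x\<in>UNIV. f $ x)"
  by (simp add: inner_vec_def)

lemma compact_base: "compact (base R)"
proof -
  have "base R \<subseteq> cbox 0 (\<chi> x. 1)"
  proof
    fix f assume f: "f \<in> base R"
    then have nn: "\<And>x. 0 \<le> f $ x" and s: "(\<Sum>x\<in>UNIV. f $ x) = 1"
      by (auto simp: base_def order_cone_def ones_inner)
    have "f $ x \<le> 1" for x using member_le_sum[of x UNIV "\<lambda>x. f $ x"] nn s by simp
    then show "f \<in> cbox 0 (\<chi> x. 1)" using nn by (simp add: mem_box_cart)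
  qed
  then have "bounded (base R)" using bounded_cbox bounded_subset by blast
  moreover have "closed (base R)" unfolding base_def by (intro closed_Int closed_order_cone closed_hyperplane)
  ultimately show ?thesis by (simp add: compact_eq_bounded_closed)
qed

lemma convex_base: "convex (base R)"
  unfolding base_def by (intro convex_Int convex_order_cone convex_hyperplane)

lemma polyhedron_base: "polyhedron (base R)"
  unfolding base_def by (intro polyhedron_Int polyhedron_order_cone polyhedron_hyperplane)

lemma finite_generating_set:
  obtains E :: "(real^'a::finite) set" where "finite E" "conical_hull E = order_cone R"
proof -
  define E where "E = {v. v extreme_point_of base R}"
  have fin: "finite E" unfolding E_def by (rule finite_polyhedron_extreme_points[OF polyhedron_base])
  have hull: "base R = convex hull E" unfolding E_def by (rule Krein_Milman_Minkowski[OF compact_base convex_base])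
  have "E \<subseteq> convex hull E" by (rule hull_subset)
  then have "E \<subseteq> base R" using hull by simp
  then have EC: "E \<subseteq> order_cone R" by (auto simp: base_def)
  have "order_cone R \<subseteq> conical_hull E"
  proof
    fix f assume f: "f \<in> order_cone R"
    define s where "s = (\<Sum>x\<in>UNIV. f $ x)"
    have nn: "\<And>x. 0 \<le> f $ x" using f by (simp add: order_cone_nonneg)
    show "f \<in> conical_hull E"
    proof (cases "s = 0")
      case True
      then have "f = 0" using sum_nonneg_eq_0_iff[of UNIV "\<lambda>x. f $ x"] nn unfolding s_def by (simp add: vec_eq_iff)
      then show ?thesis by (simp add: conical_hull_zero)
    next
      case False
      then have spos: "s > 0" using nn unfolding s_def by (metis less_eq_real_def sum_nonneg)
      have "(1/s) *\<^sub>R f \<in> base R"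
        using f spos unfolding base_def ones_inner by (auto intro: order_cone_scale simp: s_def[symmetric] sum_divide_distrib[symmetric])
      then obtain u where u: "\<forall>x\<in>E. 0 \<le> u x" "(\<Sum>x\<in>E. u x *\<^sub>R x) = (1/s) *\<^sub>R f"
        unfolding hull convex_hull_finite[OF fin] by blast
      have "f = s *\<^sub>R ((1/s) *\<^sub>R f)" using spos by simp
      also have "\<dots> = s *\<^sub>R (\<Sum>x\<in>E. u x *\<^sub>R x)" using u(2) by simp
      also have "\<dots> = (\<Sum>x\<in>E. (s * u x) *\<^sub>R x)" by (simp add: scaleR_sum_right)
      finally show ?thesis using u(1) spos by (auto intro!: conical_hullI)
    qed
  qed
  moreover have "conical_hull E \<subseteq> order_cone R" using EC by (rule conical_hull_subset_order_cone)
  ultimately show ?thesis using that fin by blast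
qed

lemma hull_remove_redundant:
  assumes fin: "finite G" and g: "g \<in> G" and gin: "g \<in> conical_hull (G - {g})"
  shows "conical_hull G \<subseteq> conical_hull (G - {g})"
proof
  fix x assume "x \<in> conical_hull G"
  then obtain c where c: "\<And>v. v \<in> G \<Longrightarrow> 0 \<le> c v" "x = (\<Sum>v\<in>G. c v *\<^sub>R v)" by (metis conical_hullE)
  have "x = c g *\<^sub>R g + (\<Sum>v\<in>G - {g}. c v *\<^sub>R v)" using c(2) sum.remove[OF fin g] by simp
  moreover have "c g *\<^sub>R g \<in> conical_hull (G - {g})" using gin c(1)[OF g] by (rule conical_hull_scale)
  moreover have "(\<Sum>v\<in>G - {g}. c v *\<^sub>R v) \<in> conical_hull (G - {g})" by (rule conical_hullI) (simp add: c(1))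
  ultimately show "x \<in> conical_hull (G - {g})" by (simp add: conical_hull_add)
qed

lemma minimal_generating_set:
  obtains G :: "(real^'a::finite) set" where "finite G" "conical_hull G = order_cone R" "minimal_gen G"
proof -
  obtain E :: "(real^'a) set" where E: "finite E" "conical_hull E = order_cone R" by (rule finite_generating_set)
  define P where "P = (\<lambda>G. G \<subseteq> E \<and> conical_hull G = order_cone R)"
  define G where "G = arg_min card P"
  have "P E" using E unfolding P_def by simp
  from arg_min_nat_lemma[of P E card, OF this] have PG: "P G" and minc: "\<And>G'. P G' \<Longrightarrow> card G \<le> card G'"
    unfolding G_def by auto
  have finG: "finite G" using PG E(1) unfolding P_def by (auto intro: finite_subset)
  have "minimal_gen G"
    unfolding minimal_gen_def
  proof (intro ballI notI)
    fix g assume g: "g \<in> G" and gin: "g \<in> conical_hull (G - {g})"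
    have "conical_hull (G - {g}) = conical_hull G"
      using hull_remove_redundant[OF finG g gin] conical_hull_mono[OF finG, of "G - {g}"] by blast
    then have "P (G - {g})" using PG unfolding P_def by auto
    then have "card G \<le> card (G - {g})" by (rule minc)
    moreover have "card (G - {g}) < card G" using finG g by (rule card_Diff1_less)
    ultimately show False by simp
  qed
  then show ?thesis using that finG PG unfolding P_def by blast
qed

section \<open>Spanning\<close>

lemma order_cone_spans:
  fixes R :: "('a::finite \<times> 'a) set"
  assumes po: "partial_order_on UNIV R"
  shows "v \<in> span (order_cone R)"
proof -
  have refl: "\<And>x. (x, x) \<in> R" and tr: "trans R" and anti: "antisym R"
    using po unfolding partial_order_on_def preorder_on_def refl_on_def by auto
  define ht :: "real^'a" where "ht = (\<chi> x. real (card {z. (z, x) \<in> R}))"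
  have ht_ge1: "1 \<le> ht $ x" for x
  proof -
    have "x \<in> {z. (z, x) \<in> R}" using refl by simp
    then have "card {z. (z, x) \<in> R} > 0" by (auto simp: card_gt_0_iff)
    then show ?thesis unfolding ht_def by simp
  qed
  have ht_mono: "ht $ x \<le> ht $ y" if "(x, y) \<in> R" for x y
  proof -
    have "{z. (z, x) \<in> R} \<subseteq> {z. (z, y) \<in> R}" using tr that unfolding trans_def by blast
    then show ?thesis unfolding ht_def by (simp add: card_mono)
  qed
  have ht_strict: "ht $ x + 1 \<le> ht $ y" if "(x, y) \<in> R" "x \<noteq> y" for x y
  proof -
    have "{z. (z, x) \<in> R} \<subset> {z. (z, y) \<in> R}"
    proof
      show "{z. (z, x) \<in> R} \<subseteq> {z. (z, y) \<in> R}" using tr that unfolding trans_def by blast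
      have "(y, x) \<notin> R" using anti that unfolding antisym_def by blast
      then show "{z. (z, x) \<in> R} \<noteq> {z. (z, y) \<in> R}" using refl[of y] by blast
    qed
    then have "card {z. (z, x) \<in> R} < card {z. (z, y) \<in> R}" by (simp add: psubset_card_mono)
    then show ?thesis unfolding ht_def by simp
  qed
  have htC: "ht \<in> order_cone R"
    unfolding order_cone_def using ht_ge1 ht_mono by (auto intro: order.trans[OF zero_le_one])
  define K where "K = (\<Sum>x\<in>UNIV. \<bar>v $ x\<bar>) + (\<Sum>x\<in>UNIV. \<bar>v $ x\<bar>)"
  have Kb: "\<bar>v $ x\<bar> \<le> (\<Sum>x\<in>UNIV. \<bar>v $ x\<bar>)" for x by (rule member_le_sum) auto
  have K0: "0 \<le> K" unfolding K_def by (simp add: sum_nonneg)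
  define f where "f = v + K *\<^sub>R ht"
  have fC: "f \<in> order_cone R"
    unfolding order_cone_def
  proof (intro CollectI conjI allI impI)
    fix x
    have "K \<le> K * ht $ x" using ht_ge1[of x] K0 by (simp add: mult_le_cancel_left1)
    moreover have "\<bar>v $ x\<bar> \<le> K" using Kb[of x] K_def by (simp add: add_increasing2 sum_nonneg)
    ultimately show "0 \<le> f $ x" unfolding f_def by simp
  next
    fix x y assume xy: "(x, y) \<in> R"
    show "f $ x \<le> f $ y"
    proof (cases "x = y")
      case True then show ?thesis by simp
    next
      case False
      have "K * (ht $ x + 1) \<le> K * ht $ y" using ht_strict[OF xy False] K0 by (simp add: mult_left_mono)
      moreover have "\<bar>v $ x\<bar> + \<bar>v $ y\<bar> \<le> K" using Kb[of x] Kb[of y] unfolding K_def by simp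
      ultimately show ?thesis unfolding f_def by (simp add: algebra_simps)
    qed
  qed
  have "v = f - K *\<^sub>R ht" unfolding f_def by simp
  then show ?thesis using fC htC by (metis span_base span_diff span_scale)
qed

lemma generators_span:
  fixes R :: "('a::finite \<times> 'a) set"
  assumes po: "partial_order_on UNIV R" and hull: "conical_hull G = order_cone R"
  shows "span G = UNIV"
proof -
  have "order_cone R \<subseteq> span G" using hull conical_hull_subset_span by blast
  then have "span (order_cone R) \<subseteq> span G" by (metis span_mono span_span)
  then show ?thesis using order_cone_spans[OF po] by blast
qed

lemma basis_in_generators:
  fixes G :: "(real^'a::finite) set"
  assumes "span G = UNIV"
  obtains B where "B \<subseteq> G" "independent B" "card B = CARD('a)" "span B = UNIV"
proof -
  obtain B where B: "B \<subseteq> G" "independent B" "G \<subseteq> span B" by (rule maximal_independent_subset)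
  have "span B = UNIV" using B(3) assms by (metis span_minimal subspace_span top.extremum_uniqueI)
  have "card B = dim B" using dim_eq_card_independent[OF B(2)] by simp
  also have "\<dots> = dim (span B)" by simp
  also have "\<dots> = CARD('a)" using \<open>span B = UNIV\<close> dim_UNIV[where 'a="real^'a"] by (simp add: DIM_cart)
  finally show ?thesis using that B \<open>span B = UNIV\<close> by blast
qed



lemma ND_leI:
  assumes "\<And>i. i < r \<Longrightarrow> a i \<in> order_cone R1" "\<And>i. i < r \<Longrightarrow> b i \<in> order_cone R2"
  shows "(\<Sum>i<r. outer (a i) (b i)) \<in> ND_le R1 R2 r"
  unfolding ND_le_def using assms by blast

lemma ND_leE:
  assumes "M \<in> ND_le R1 R2 r"
  obtains a b where "\<And>i. i < r \<Longrightarrow> a i \<in> order_cone R1" "\<And>i. i < r \<Longrightarrow> b i \<in> order_cone R2"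
    "M = (\<Sum>i<r. outer (a i) (b i))"
  using assms unfolding ND_le_def by blast

lemma ND_le_mono:
  assumes "k \<le> k'" shows "ND_le R1 R2 k \<subseteq> ND_le R1 R2 k'"
proof
  fix M assume M: "M \<in> ND_le R1 R2 k"
  then obtain a b where ab: "\<And>i. i < k \<Longrightarrow> a i \<in> order_cone R1" "\<And>i. i < k \<Longrightarrow> b i \<in> order_cone R2"
    "M = (\<Sum>i<k. outer (a i) (b i))" using M unfolding ND_le_def by blast
  define a' where "a' = (\<lambda>i. if i < k then a i else 0)"
  have "M = (\<Sum>i<k'. outer (a' i) (b i))"
  proof -
    have "(\<Sum>i<k'. outer (a' i) (b i)) = (\<Sum>i<k. outer (a' i) (b i))"
      using assms by (intro sum.mono_neutral_right) (auto simp: a'_def)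
    also have "\<dots> = M" using ab(3) by (simp add: a'_def)
    finally show ?thesis by simp
  qed
  moreover have "(\<Sum>i<k'. outer (a' i) (if i < k then b i else 0)) = (\<Sum>i<k'. outer (a' i) (b i))"
    by (rule sum.cong) (auto simp: a'_def)
  ultimately have "M = (\<Sum>i<k'. outer (a' i) (if i < k then b i else 0))" by simp
  moreover have "(\<Sum>i<k'. outer (a' i) (if i < k then b i else 0)) \<in> ND_le R1 R2 k'"
    by (rule ND_leI) (auto simp: a'_def ab)
  ultimately show "M \<in> ND_le R1 R2 k'" by simp
qed

lemma ND_le_sum:
  assumes fin: "finite J" and x: "\<And>j. j \<in> J \<Longrightarrow> x j \<in> order_cone R1" and y: "\<And>j. j \<in> J \<Longrightarrow> y j \<in> order_cone R2"
  shows "(\<Sum>j\<in>J. outer (x j) (y j)) \<in> ND_le R1 R2 (card J)"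
proof -
  obtain h where h: "bij_betw h {0..<card J} J" using ex_bij_betw_nat_finite[OF fin] by blast
  have "(\<Sum>i<card J. outer (x (h i)) (y (h i))) = (\<Sum>j\<in>J. outer (x j) (y j))"
    using sum.reindex_bij_betw[OF h, of "\<lambda>j. outer (x j) (y j)"] by (simp add: atLeast0LessThan)
  moreover have "(\<Sum>i<card J. outer (x (h i)) (y (h i))) \<in> ND_le R1 R2 (card J)"
  proof (rule ND_leI)
    fix i assume "i < card J"
    then have "h i \<in> J" using h by (auto simp: bij_betw_def)
    then show "x (h i) \<in> order_cone R1" "y (h i) \<in> order_cone R2" using x y by auto
  qed
  ultimately show ?thesis by simp
qed

lemma outer_exchange:
  "(\<Sum>j\<in>J. outer (\<Sum>e\<in>E. c j e *\<^sub>R e) (y j)) = (\<Sum>e\<in>E. outer e (\<Sum>j\<in>J. c j e *\<^sub>R y j))"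
  by (simp add: outer_sum_left outer_sum_right outer_scale_left outer_scale_right sum.swap[of _ J])

lemma outer_exchange2:
  "(\<Sum>j\<in>J. outer (x j) (\<Sum>e\<in>E. c j e *\<^sub>R e)) = (\<Sum>e\<in>E. outer (\<Sum>j\<in>J. c j e *\<^sub>R x j) e)"
  by (simp add: outer_sum_left outer_sum_right outer_scale_left outer_scale_right sum.swap[of _ J])

lemma ND_le_hull_left:
  assumes finJ: "finite J" and finE: "finite E" and E: "E \<subseteq> order_cone R1"
    and x: "\<And>j. j \<in> J \<Longrightarrow> x j \<in> conical_hull E" and y: "\<And>j. j \<in> J \<Longrightarrow> y j \<in> order_cone R2"
  shows "(\<Sum>j\<in>J. outer (x j) (y j)) \<in> ND_le R1 R2 (card E)"
proof -
  have "\<exists>c. (\<forall>e\<in>E. 0 \<le> c e) \<and> x j = (\<Sum>e\<in>E. c e *\<^sub>R e)" if "j \<in> J" for j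
    using x[OF that] by (metis conical_hullE)
  then obtain c where c: "\<And>j e. j \<in> J \<Longrightarrow> e \<in> E \<Longrightarrow> 0 \<le> c j e" "\<And>j. j \<in> J \<Longrightarrow> x j = (\<Sum>e\<in>E. c j e *\<^sub>R e)"
    by metis
  have "(\<Sum>j\<in>J. outer (x j) (y j)) = (\<Sum>j\<in>J. outer (\<Sum>e\<in>E. c j e *\<^sub>R e) (y j))"
    using c(2) by simp
  also have "\<dots> = (\<Sum>e\<in>E. outer e (\<Sum>j\<in>J. c j e *\<^sub>R y j))" by (rule outer_exchange)
  also have "\<dots> \<in> ND_le R1 R2 (card E)"
    by (rule ND_le_sum[OF finE]) (use E in \<open>auto intro!: order_cone_comb y c(1)\<close>)
  finally show ?thesis .
qed

lemma ND_le_hull_right: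
  assumes finJ: "finite J" and finE: "finite E" and E: "E \<subseteq> order_cone R2"
    and x: "\<And>j. j \<in> J \<Longrightarrow> x j \<in> order_cone R1" and y: "\<And>j. j \<in> J \<Longrightarrow> y j \<in> conical_hull E"
  shows "(\<Sum>j\<in>J. outer (x j) (y j)) \<in> ND_le R1 R2 (card E)"
proof -
  have "\<exists>c. (\<forall>e\<in>E. 0 \<le> c e) \<and> y j = (\<Sum>e\<in>E. c e *\<^sub>R e)" if "j \<in> J" for j
    using y[OF that] by (metis conical_hullE)
  then obtain c where c: "\<And>j e. j \<in> J \<Longrightarrow> e \<in> E \<Longrightarrow> 0 \<le> c j e" "\<And>j. j \<in> J \<Longrightarrow> y j = (\<Sum>e\<in>E. c j e *\<^sub>R e)"
    by metis
  have "(\<Sum>j\<in>J. outer (x j) (y j)) = (\<Sum>j\<in>J. outer (x j) (\<Sum>e\<in>E. c j e *\<^sub>R e))"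
    using c(2) by simp
  also have "\<dots> = (\<Sum>e\<in>E. outer (\<Sum>j\<in>J. c j e *\<^sub>R x j) e)" by (rule outer_exchange2)
  also have "\<dots> \<in> ND_le R1 R2 (card E)"
    by (rule ND_le_sum[OF finE]) (use E in \<open>auto intro!: order_cone_comb x c(1)\<close>)
  finally show ?thesis .
qed

lemma ND_le_bound:
  assumes finG: "finite G" and G: "conical_hull G = order_cone R1"
    and finS: "finite S" and S: "conical_hull S = order_cone R2"
    and M: "M \<in> ND_le R1 R2 k"
  shows "M \<in> ND_le R1 R2 (card G)" "M \<in> ND_le R1 R2 (card S)"
proof -
  obtain a b where ab: "\<And>i. i < k \<Longrightarrow> a i \<in> order_cone R1" "\<And>i. i < k \<Longrightarrow> b i \<in> order_cone R2"
    "M = (\<Sum>i<k. outer (a i) (b i))" using M unfolding ND_le_def by blast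
  have GC: "G \<subseteq> order_cone R1" using G conical_hull_base[OF finG] by blast
  have SC: "S \<subseteq> order_cone R2" using S conical_hull_base[OF finS] by blast
  show "M \<in> ND_le R1 R2 (card G)" unfolding ab(3)
    by (rule ND_le_hull_left[OF _ finG GC]) (use ab G in auto)
  show "M \<in> ND_le R1 R2 (card S)" unfolding ab(3)
    by (rule ND_le_hull_right[OF _ finS SC]) (use ab S in auto)
qed



definition cs :: "real^'b^'a \<Rightarrow> (real^'a) set" where
  "cs M = span (range (\<lambda>j. column j M))"

lemma column_sum: "column j (\<Sum>i\<in>I. f i) = (\<Sum>i\<in>I. column j (f i))"
  by (induct I rule: infinite_finite_induct) (auto simp: column_def vec_eq_iff)

lemma column_outer: "column j (outer a b) = (b $ j) *\<^sub>R a"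
  by (simp add: column_def vec_eq_iff mult.commute)

lemma column_add: "column j (A + B) = column j A + column j B"
  by (simp add: column_def vec_eq_iff)

lemma column_scale: "column j (c *\<^sub>R A) = c *\<^sub>R column j A"
  by (simp add: column_def vec_eq_iff)

lemma dim_cs_ND_le:
  assumes "M \<in> ND_le R1 R2 r" shows "dim (cs M) \<le> r"
proof -
  obtain a b where ab: "M = (\<Sum>i<r. outer (a i) (b i))"
    using assms unfolding ND_le_def by blast
  have "range (\<lambda>j. column j M) \<subseteq> span (a ` {..<r})"
  proof
    fix x assume "x \<in> range (\<lambda>j. column j M)"
    then obtain j where "x = column j M" by blast
    then have "x = (\<Sum>i<r. (b i $ j) *\<^sub>R a i)" unfolding ab by (simp add: column_sum column_outer)
    moreover have "(\<Sum>i<r. (b i $ j) *\<^sub>R a i) \<in> span (a ` {..<r})"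
      by (intro span_sum span_scale span_base) simp
    ultimately show "x \<in> span (a ` {..<r})" by simp
  qed
  then have "dim (cs M) \<le> dim (a ` {..<r})"
    unfolding cs_def by (metis dim_span dim_subset span_mono span_span)
  also have "\<dots> \<le> card (a ` {..<r})" by (rule dim_le_card') simp
  also have "\<dots> \<le> r" using card_image_le[of "{..<r}" a] by simp
  finally show ?thesis .
qed

lemma perturb_increase:
  fixes M :: "real^'b^'a"
  assumes d1: "dim (cs M) < CARD('a)" and d2: "dim (cs M) < CARD('b)" and e: "\<epsilon> > 0"
  shows "\<exists>M'. dist M' M < \<epsilon> \<and> dim (cs M) < dim (cs M')"
proof -
  have "cs M \<noteq> UNIV"
  proof
    assume "cs M = UNIV"
    then have "dim (cs M) = CARD('a)" using dim_UNIV[where 'a="real^'a"] by (simp add: DIM_cart)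
    then show False using d1 by simp
  qed
  then obtain u where u: "u \<notin> cs M" by blast
  have u0: "u \<noteq> 0" using u span_zero unfolding cs_def by blast
  obtain j where j: "column j M \<in> span ((\<lambda>j. column j M) ` (UNIV - {j}))"
  proof (rule ccontr)
    assume "\<not> thesis"
    then have nj: "\<And>j. column j M \<notin> span ((\<lambda>j. column j M) ` (UNIV - {j}))" using that by blast
    have inj: "inj (\<lambda>j. column j M)"
    proof (rule injI, rule ccontr)
      fix j j' assume eq: "column j M = column j' M" and ne: "j \<noteq> j'"
      then have "column j M \<in> (\<lambda>j. column j M) ` (UNIV - {j})" by force
      then have "column j M \<in> span ((\<lambda>j. column j M) ` (UNIV - {j}))" by (rule span_base)
      then show False using nj[of j] by simp
    qed
    have "independent (range (\<lambda>j. column j M))"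
      unfolding dependent_def
    proof
      assume "\<exists>a\<in>range (\<lambda>j. column j M). a \<in> span (range (\<lambda>j. column j M) - {a})"
      then obtain j where "column j M \<in> span (range (\<lambda>j. column j M) - {column j M})" by blast
      moreover have "range (\<lambda>j. column j M) - {column j M} \<subseteq> (\<lambda>j. column j M) ` (UNIV - {j})" by blast
      then have "span (range (\<lambda>j. column j M) - {column j M}) \<subseteq> span ((\<lambda>j. column j M) ` (UNIV - {j}))"
        by (rule span_mono)
      ultimately show False using nj[of j] by blast
    qed
    then have "dim (cs M) = card (range (\<lambda>j. column j M))"
      unfolding cs_def by (simp add: dim_eq_card_independent)
    also have "\<dots> = CARD('b)" using card_image[OF inj] by simp
    finally show False using d2 by simp
  qed
  define E where "E = outer u (axis j (1::real))"
  have E0: "E \<noteq> 0"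
  proof
    assume "E = 0"
    then have "column j E = 0" by (simp add: column_def vec_eq_iff)
    then have "u = 0" unfolding E_def column_outer by simp
    then show False using u0 by simp
  qed
  define t where "t = \<epsilon> / (2 * norm E)"
  have tpos: "t > 0" unfolding t_def using e E0 by simp
  define M' where "M' = M + t *\<^sub>R E"
  have "dist M' M = norm (t *\<^sub>R E)" unfolding M'_def by (simp add: dist_norm)
  also have "\<dots> = \<epsilon> / 2" unfolding t_def using e E0 by simp
  also have "\<dots> < \<epsilon>" using e by simp
  finally have dM: "dist M' M < \<epsilon>" .
  have colE: "column k E = (if k = j then u else 0)" for k
    unfolding E_def column_outer by (simp add: axis_def)
  have colM': "column k M' = column k M + (if k = j then t *\<^sub>R u else 0)" for k
    unfolding M'_def column_add column_scale colE by simp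
  have other: "(\<lambda>j. column j M) ` (UNIV - {j}) \<subseteq> cs M'"
    unfolding cs_def using colM' by (force intro: span_base)
  have colj: "column j M \<in> cs M'"
    using j other span_mono[OF other] unfolding cs_def by (simp add: span_span) blast
  have allcols: "range (\<lambda>j. column j M) \<subseteq> cs M'"
  proof
    fix x assume "x \<in> range (\<lambda>j. column j M)"
    then obtain k where "x = column k M" by blast
    then show "x \<in> cs M'" using colj other by (cases "k = j") auto
  qed
  have csub: "cs M \<subseteq> cs M'" unfolding cs_def using allcols unfolding cs_def
    by (metis span_minimal subspace_span)
  have "column j M' \<in> cs M'" unfolding cs_def by (rule span_base) blast
  then have "column j M' - column j M \<in> cs M'" using colj unfolding cs_def by (rule span_diff)
  then have "t *\<^sub>R u \<in> cs M'" using colM'[of j] by simp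
  then have "(1/t) *\<^sub>R (t *\<^sub>R u) \<in> cs M'" unfolding cs_def by (rule span_scale)
  then have "u \<in> cs M'" using tpos by simp
  then have "insert u (cs M) \<subseteq> cs M'" using csub by blast
  then have "dim (insert u (cs M)) \<le> dim (cs M')" by (rule dim_subset)
  moreover have "dim (insert u (cs M)) = dim (cs M) + 1"
    using u unfolding dim_insert cs_def by (simp add: span_span)
  ultimately show ?thesis using dM by auto
qed

lemma interior_ND_le_empty:
  assumes r: "r < min CARD('a::finite) CARD('b::finite)"
  shows "interior (ND_le (R1::('a \<times> 'a) set) (R2::('b \<times> 'b) set) r) = {}"
proof (rule ccontr)
  assume "interior (ND_le R1 R2 r) \<noteq> {}"
  then obtain x where "x \<in> interior (ND_le R1 R2 r)" by blast
  then obtain \<epsilon> where e: "\<epsilon> > 0" "ball x \<epsilon> \<subseteq> ND_le R1 R2 r" by (meson mem_interior)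
  define D where "D = (\<lambda>M. dim (cs M)) ` ball x \<epsilon>"
  have Dle: "D \<subseteq> {..r}" unfolding D_def using e(2) dim_cs_ND_le by fastforce
  then have finD: "finite D" using finite_subset by blast
  have "D \<noteq> {}" unfolding D_def using e(1) by simp
  then have "Max D \<in> D" using finD by simp
  then obtain M0 where M0: "M0 \<in> ball x \<epsilon>" "dim (cs M0) = Max D" unfolding D_def by auto
  have "dim (cs M0) \<le> r" using Dle M0 \<open>Max D \<in> D\<close> by auto
  then have d: "dim (cs M0) < CARD('a)" "dim (cs M0) < CARD('b)" using r by auto
  have "\<epsilon> - dist x M0 > 0" using M0(1) by simp
  from perturb_increase[OF d this] obtain M' where M': "dist M' M0 < \<epsilon> - dist x M0" "dim (cs M0) < dim (cs M')" by blast
  have "M' \<in> ball x \<epsilon>" using M'(1) dist_triangle[of x M' M0] by (simp add: dist_commute)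
  then have "dim (cs M') \<in> D" unfolding D_def by blast
  then have "dim (cs M') \<le> Max D" using finD by simp
  then show False using M0(2) M'(2) by simp
qed



definition Tset :: "('a::finite \<times> 'a) set \<Rightarrow> ('b::finite \<times> 'b) set \<Rightarrow> real \<Rightarrow> (real^'b^'a) set" where
  "Tset R1 R2 B = {outer a c | a c. a \<in> order_cone R1 \<and> (\<forall>x. a $ x \<le> 1) \<and> c \<in> order_cone R2 \<and> (\<forall>y. c $ y \<le> B)}"

lemma compact_Tset: "compact (Tset (R1::('a::finite \<times> 'a) set) (R2::('b::finite \<times> 'b) set) B)"
proof -
  let ?A = "order_cone R1 \<inter> cbox 0 (\<chi> x. 1)"
  let ?C = "order_cone R2 \<inter> cbox 0 (\<chi> x. B)"
  have "Tset R1 R2 B = (\<lambda>p. outer (fst p) (snd p)) ` (?A \<times> ?C)"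
  proof (intro set_eqI iffI)
    fix z assume "z \<in> Tset R1 R2 B"
    then obtain a c where ac: "z = outer a c" "a \<in> order_cone R1" "\<forall>x. a $ x \<le> 1" "c \<in> order_cone R2" "\<forall>y. c $ y \<le> B"
      unfolding Tset_def by blast
    then have "(a, c) \<in> ?A \<times> ?C" by (auto simp: mem_box_cart order_cone_nonneg)
    then show "z \<in> (\<lambda>p. outer (fst p) (snd p)) ` (?A \<times> ?C)" using ac(1) by (auto intro: rev_image_eqI)
  next
    fix z assume "z \<in> (\<lambda>p. outer (fst p) (snd p)) ` (?A \<times> ?C)"
    then obtain a c where "z = outer a c" "a \<in> ?A" "c \<in> ?C" by auto
    then show "z \<in> Tset R1 R2 B" unfolding Tset_def by (auto simp: mem_box_cart)
  qed
  moreover have "compact (?A \<times> ?C)"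
    by (intro compact_Times closed_Int_compact closed_order_cone compact_cbox)
  moreover have "continuous_on UNIV (\<lambda>p::(real^'a) \<times> (real^'b). outer (fst p) (snd p))"
    unfolding outer_def by (intro continuous_intros)
  then have "continuous_on (?A \<times> ?C) (\<lambda>p::(real^'a) \<times> (real^'b). outer (fst p) (snd p))"
    by (rule continuous_on_subset) simp
  ultimately show ?thesis by (simp add: compact_continuous_image)
qed

definition Kset :: "('a::finite \<times> 'a) set \<Rightarrow> ('b::finite \<times> 'b) set \<Rightarrow> real \<Rightarrow> nat \<Rightarrow> (real^'b^'a) set" where
  "Kset R1 R2 B k = {(\<Sum>i<k. t i) | t. \<forall>i<k. t i \<in> Tset R1 R2 B}"

lemma Kset_0: "Kset R1 R2 B 0 = {0}"
  unfolding Kset_def by auto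

lemma Kset_Suc: "Kset R1 R2 B (Suc k) = {x + y | x y. x \<in> Kset R1 R2 B k \<and> y \<in> Tset R1 R2 B}"
proof (intro set_eqI iffI)
  fix z assume "z \<in> Kset R1 R2 B (Suc k)"
  then obtain t where t: "\<forall>i<Suc k. t i \<in> Tset R1 R2 B" "z = (\<Sum>i<Suc k. t i)" unfolding Kset_def by blast
  then have "z = (\<Sum>i<k. t i) + t k" by simp
  moreover have "(\<Sum>i<k. t i) \<in> Kset R1 R2 B k" using t(1) unfolding Kset_def by auto
  ultimately show "z \<in> {x + y | x y. x \<in> Kset R1 R2 B k \<and> y \<in> Tset R1 R2 B}" using t(1) by blast
next
  fix z assume "z \<in> {x + y | x y. x \<in> Kset R1 R2 B k \<and> y \<in> Tset R1 R2 B}"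
  then obtain x y where xy: "z = x + y" "x \<in> Kset R1 R2 B k" "y \<in> Tset R1 R2 B" by blast
  then obtain t where t: "\<forall>i<k. t i \<in> Tset R1 R2 B" "x = (\<Sum>i<k. t i)" unfolding Kset_def by blast
  define t' where "t' = t(k := y)"
  have "(\<Sum>i<Suc k. t' i) = (\<Sum>i<k. t' i) + y" by (simp add: t'_def)
  also have "(\<Sum>i<k. t' i) = x" unfolding t(2) t'_def by (rule sum.cong) auto
  finally have "z = (\<Sum>i<Suc k. t' i)" using xy(1) by simp
  moreover have "\<forall>i<Suc k. t' i \<in> Tset R1 R2 B" using t(1) xy(3) by (auto simp: t'_def less_Suc_eq)
  ultimately show "z \<in> Kset R1 R2 B (Suc k)" unfolding Kset_def by blast
qed

lemma compact_Kset: "compact (Kset R1 R2 B k)"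
proof (induct k)
  case 0 show ?case by (simp add: Kset_0)
next
  case (Suc k) show ?case unfolding Kset_Suc by (rule compact_sums[OF Suc compact_Tset])
qed

lemma Kset_member:
  fixes M :: "real^'b::finite^'a::finite"
  assumes M: "M \<in> ND_le R1 R2 k" and bound: "\<And>x y. M $ x $ y \<le> B"
  shows "M \<in> Kset R1 R2 B k"
proof -
  obtain a b where ab: "\<And>i. i < k \<Longrightarrow> a i \<in> order_cone R1" "\<And>i. i < k \<Longrightarrow> b i \<in> order_cone R2"
    "M = (\<Sum>i<k. outer (a i) (b i))" using M unfolding ND_le_def by blast
  have termle: "a i $ x * b i $ y \<le> M $ x $ y" if "i < k" for i x y
  proof -
    have "M $ x $ y = (\<Sum>j<k. a j $ x * b j $ y)" unfolding ab(3) by (simp add: sum_component)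
    moreover have "a i $ x * b i $ y \<le> (\<Sum>j<k. a j $ x * b j $ y)"
      using that by (intro member_le_sum) (auto intro!: mult_nonneg_nonneg order_cone_nonneg ab)
    ultimately show ?thesis by simp
  qed
  have "\<forall>i<k. outer (a i) (b i) \<in> Tset R1 R2 B"
  proof (intro allI impI)
    fix i assume i: "i < k"
    define \<alpha> where "\<alpha> = Max (range (\<lambda>x. a i $ x))"
    have "\<alpha> \<in> range (\<lambda>x. a i $ x)" unfolding \<alpha>_def by (rule Max_in) auto
    then obtain x0 where x0: "\<alpha> = a i $ x0" by auto
    have amax: "a i $ x \<le> \<alpha>" for x unfolding \<alpha>_def by (rule Max_ge) auto
    have a0: "0 \<le> \<alpha>" using x0 order_cone_nonneg[OF ab(1)[OF i]] by simp
    show "outer (a i) (b i) \<in> Tset R1 R2 B"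
    proof (cases "\<alpha> = 0")
      case True
      then have "a i = 0" using amax order_cone_nonneg[OF ab(1)[OF i]] by (simp add: vec_eq_iff antisym)
      then have "outer (a i) (b i) = outer 0 0" by simp
      moreover have "outer 0 0 \<in> Tset R1 R2 B"
      proof -
        have "0 \<le> B" using bound[of x0 undefined] termle[OF i, of x0 undefined]
          \<open>a i = 0\<close> by simp
        then show ?thesis unfolding Tset_def by (auto intro!: exI[of _ 0])
      qed
      ultimately show ?thesis by simp
    next
      case False
      then have ap: "\<alpha> > 0" using a0 by simp
      have "outer (a i) (b i) = outer ((1/\<alpha>) *\<^sub>R a i) (\<alpha> *\<^sub>R b i)"
        using ap by (simp add: outer_scale_left outer_scale_right)
      moreover have "(1/\<alpha>) *\<^sub>R a i \<in> order_cone R1" using ap ab(1)[OF i] by (simp add: order_cone_scale)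
      moreover have "\<alpha> *\<^sub>R b i \<in> order_cone R2" using ap ab(2)[OF i] by (simp add: order_cone_scale)
      moreover have "((1/\<alpha>) *\<^sub>R a i) $ x \<le> 1" for x using amax[of x] ap by (simp add: divide_le_eq_1)
      moreover have "(\<alpha> *\<^sub>R b i) $ y \<le> B" for y
        using termle[OF i, of x0 y] bound[of x0 y] x0 by simp
      ultimately show ?thesis unfolding Tset_def by blast
    qed
  qed
  then show ?thesis unfolding Kset_def ab(3) by blast
qed

lemma ND_le_avoid_nbhd:
  fixes Mst :: "real^'b::finite^'a::finite"
  assumes notin: "Mst \<notin> ND_le R1 R2 k"
  shows "\<exists>\<eta>>0. \<forall>M. dist M Mst < \<eta> \<longrightarrow> M \<notin> ND_le R1 R2 k"
proof -
  define B where "B = (\<Sum>x\<in>UNIV. \<Sum>y\<in>UNIV. \<bar>Mst $ x $ y\<bar>) + 1"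
  have Bb: "Mst $ x $ y + 1 \<le> B" for x y
  proof -
    have "\<bar>Mst $ x $ y\<bar> \<le> (\<Sum>y\<in>UNIV. \<bar>Mst $ x $ y\<bar>)" by (rule member_le_sum) auto
    also have "\<dots> \<le> (\<Sum>x\<in>UNIV. \<Sum>y\<in>UNIV. \<bar>Mst $ x $ y\<bar>)"
      by (rule member_le_sum[of x UNIV "\<lambda>x. \<Sum>y\<in>UNIV. \<bar>Mst $ x $ y\<bar>"]) (auto intro: sum_nonneg)
    finally show ?thesis unfolding B_def by simp
  qed
  have KsubN: "Kset R1 R2 B k \<subseteq> ND_le R1 R2 k"
  proof
    fix M assume "M \<in> Kset R1 R2 B k"
    then obtain t where t: "\<forall>i<k. t i \<in> Tset R1 R2 B" "M = (\<Sum>i<k. t i)" unfolding Kset_def by blast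
    have "\<forall>i. \<exists>p. i < k \<longrightarrow> fst p \<in> order_cone R1 \<and> snd p \<in> order_cone R2 \<and> t i = outer (fst p) (snd p)"
      using t(1) unfolding Tset_def by fastforce
    then obtain p where p: "\<And>i. i < k \<Longrightarrow> fst (p i) \<in> order_cone R1 \<and> snd (p i) \<in> order_cone R2 \<and> t i = outer (fst (p i)) (snd (p i))"
      by metis
    have "M = (\<Sum>i<k. outer (fst (p i)) (snd (p i)))" unfolding t(2) by (rule sum.cong) (auto simp: p)
    moreover have "(\<Sum>i<k. outer (fst (p i)) (snd (p i))) \<in> ND_le R1 R2 k" by (rule ND_leI) (auto simp: p)
    ultimately show "M \<in> ND_le R1 R2 k" by simp
  qed
  have "Mst \<notin> Kset R1 R2 B k" using notin KsubN by blast
  moreover have "open (- Kset R1 R2 B k)" using compact_Kset compact_imp_closed by blast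
  ultimately obtain \<eta>0 where e0: "\<eta>0 > 0" "ball Mst \<eta>0 \<subseteq> - Kset R1 R2 B k"
    by (meson ComplI open_contains_ball)
  show ?thesis
  proof (intro exI[of _ "min \<eta>0 1"] conjI allI impI notI)
    show "0 < min \<eta>0 1" using e0 by simp
    fix M assume d: "dist M Mst < min \<eta>0 1" and M: "M \<in> ND_le R1 R2 k"
    have "M $ x $ y \<le> B" for x y
    proof -
      have "\<bar>(M - Mst) $ x $ y\<bar> \<le> norm ((M - Mst) $ x)" by (rule component_le_norm_cart)
      also have "\<dots> \<le> norm (M - Mst)" using Finite_Cartesian_Product.norm_nth_le[of "M - Mst" x] by simp
      also have "\<dots> < 1" using d by (simp add: dist_norm)
      finally show ?thesis using Bb[of x y] by simp
    qed
    then have "M \<in> Kset R1 R2 B k" by (rule Kset_member[OF M])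
    moreover have "M \<in> ball Mst \<eta>0" using d by (simp add: dist_commute)
    ultimately show False using e0(2) by blast
  qed
qed



lemma ball_in_hull:
  fixes B :: "(real^'a::finite) set"
  assumes indep: "independent B" and cardB: "card B = CARD('a)" and BE: "B \<subseteq> E" and finE: "finite E"
  shows "\<exists>w \<delta>. \<delta> > 0 \<and> ball w \<delta> \<subseteq> conical_hull E"
proof -
  have finB: "finite B" using BE finE finite_subset by blast
  obtain \<psi> where psi: "bij_betw \<psi> (UNIV::'a set) B"
    using finite_same_card_bij[of "UNIV::'a set" B] finB cardB by auto
  define Lin where "Lin = (\<lambda>l::real^'a. \<Sum>x\<in>UNIV. (l $ x) *\<^sub>R \<psi> x)"
  have lin: "linear Lin"
    by (rule linearI) (simp_all add: Lin_def scaleR_add_left sum.distrib scaleR_sum_right)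
  have spanB: "span B = UNIV"
    using card_eq_dim[of B UNIV] indep finB cardB dim_UNIV[where 'a="real^'a"] by (auto simp: DIM_cart)
  have "B \<subseteq> range Lin"
  proof
    fix b assume "b \<in> B"
    then obtain x where x: "b = \<psi> x" using psi by (auto simp: bij_betw_def)
    have "Lin (axis x 1) = (\<Sum>y\<in>UNIV. if y = x then \<psi> y else 0)"
      unfolding Lin_def by (rule sum.cong) (auto simp: axis_def)
    also have "\<dots> = \<psi> x" by simp
    finally show "b \<in> range Lin" using x by (metis rangeI)
  qed
  then have "span B \<subseteq> range Lin"
    by (rule span_minimal) (rule linear_subspace_image[OF lin subspace_UNIV])
  then have surj: "surj Lin" using spanB by auto
  define P where "P = (\<Inter>x\<in>UNIV. {l::real^'a. 0 < l $ x})"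
  have "open P" unfolding P_def
    by (rule open_INT) (auto intro!: open_Collect_less continuous_intros)
  then have oP: "open (Lin ` P)" using open_surjective_linear_image lin surj by blast
  have w: "Lin (\<chi> x. 1) \<in> Lin ` P" unfolding P_def by auto
  obtain \<delta> where d: "\<delta> > 0" "ball (Lin (\<chi> x. 1)) \<delta> \<subseteq> Lin ` P" using oP w open_contains_ball by blast
  have "Lin ` P \<subseteq> conical_hull B"
  proof
    fix z assume "z \<in> Lin ` P"
    then obtain l where l: "l \<in> P" "z = Lin l" by blast
    have "z = (\<Sum>b\<in>B. (l $ inv_into UNIV \<psi> b) *\<^sub>R b)"
    proof -
      have "(\<Sum>b\<in>B. (l $ inv_into UNIV \<psi> b) *\<^sub>R b) = (\<Sum>x\<in>UNIV. (l $ inv_into UNIV \<psi> (\<psi> x)) *\<^sub>R \<psi> x)"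
        using sum.reindex_bij_betw[OF psi, of "\<lambda>b. (l $ inv_into UNIV \<psi> b) *\<^sub>R b"] by simp
      also have "\<dots> = Lin l" unfolding Lin_def
        using psi by (intro sum.cong) (auto simp: bij_betw_def inv_into_f_f)
      finally show ?thesis using l by simp
    qed
    moreover have "(\<Sum>b\<in>B. (l $ inv_into UNIV \<psi> b) *\<^sub>R b) \<in> conical_hull B"
      by (rule conical_hullI) (use l(1) in \<open>auto simp: P_def less_imp_le\<close>)
    ultimately show "z \<in> conical_hull B" by simp
  qed
  also have "\<dots> \<subseteq> conical_hull E" by (rule conical_hull_mono[OF finE BE])
  finally show ?thesis using d by blast
qed

lemma outer_row: "(outer d b) $ x = (d $ x) *\<^sub>R b"
  by (simp add: vec_eq_iff)

lemma outer_unique: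
  fixes S :: "(real^'b::finite) set" and m m' :: "real^'b \<Rightarrow> real^'a::finite"
  assumes indep: "independent S" and eq: "(\<Sum>b\<in>S. outer (m b) b) = (\<Sum>b\<in>S. outer (m' b) b)"
    and b: "b \<in> S"
  shows "m b = m' b"
proof -
  have finS: "finite S" using indep independent_bound_general by blast
  have "m b $ x = m' b $ x" for x
  proof -
    have "(\<Sum>b\<in>S. outer (m b) b) $ x = (\<Sum>b\<in>S. outer (m' b) b) $ x" using eq by simp
    then have "(\<Sum>b\<in>S. (m b $ x) *\<^sub>R b) = (\<Sum>b\<in>S. (m' b $ x) *\<^sub>R b)"
      by (simp add: sum_component outer_row)
    then have "(\<Sum>b\<in>S. (m b $ x - m' b $ x) *\<^sub>R b) = 0"
      by (simp add: scaleR_diff_left sum_subtractf)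
    then show ?thesis using indep b unfolding independent_explicit by auto
  qed
  then show ?thesis by (simp add: vec_eq_iff)
qed



lemma not_in_lower:
  fixes R1 :: "('a::finite \<times> 'a) set" and R2 :: "('b::finite \<times> 'b) set"
  assumes finG: "finite G" and Ghull: "conical_hull G = order_cone R1" and mgG: "minimal_gen G"
    and indepS: "independent S" and Shull: "conical_hull S = order_cone R2"
    and einj: "inj_on e {..<r}" and eG: "\<And>i. i < r \<Longrightarrow> e i \<in> G"
    and sinj: "inj_on \<sigma> {..<r}" and sS: "\<And>i. i < r \<Longrightarrow> \<sigma> i \<in> S"
    and r1: "1 \<le> r"
  shows "(\<Sum>i<r. outer (e i) (\<sigma> i)) \<notin> ND_le R1 R2 (r - 1)"
proof
  assume "(\<Sum>i<r. outer (e i) (\<sigma> i)) \<in> ND_le R1 R2 (r - 1)"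
  then obtain a c where ac: "\<And>k. k < r - 1 \<Longrightarrow> a k \<in> order_cone R1" "\<And>k. k < r - 1 \<Longrightarrow> c k \<in> order_cone R2"
    and Meq: "(\<Sum>i<r. outer (e i) (\<sigma> i)) = (\<Sum>k<r - 1. outer (a k) (c k))" unfolding ND_le_def by blast
  have finS: "finite S" using indepS independent_bound_general by blast
  have orth: "orth_cone (conical_hull G)" using Ghull orth_order_cone by simp
  have "\<forall>k. \<exists>l. k < r - 1 \<longrightarrow> (\<forall>b\<in>S. 0 \<le> l b) \<and> c k = (\<Sum>b\<in>S. l b *\<^sub>R b)"
  proof
    fix k show "\<exists>l. k < r - 1 \<longrightarrow> (\<forall>b\<in>S. 0 \<le> l b) \<and> c k = (\<Sum>b\<in>S. l b *\<^sub>R b)"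
    proof (cases "k < r - 1")
      case True
      then have "c k \<in> conical_hull S" using ac(2) Shull by simp
      then show ?thesis by (metis conical_hullE)
    qed simp
  qed
  then obtain l where l: "\<And>k b. k < r - 1 \<Longrightarrow> b \<in> S \<Longrightarrow> 0 \<le> l k b" "\<And>k. k < r - 1 \<Longrightarrow> c k = (\<Sum>b\<in>S. l k b *\<^sub>R b)"
    by metis
  have rhs: "(\<Sum>k<r - 1. outer (a k) (c k)) = (\<Sum>b\<in>S. outer (\<Sum>k<r - 1. l k b *\<^sub>R a k) b)"
  proof -
    have "(\<Sum>k<r - 1. outer (a k) (c k)) = (\<Sum>k<r - 1. outer (a k) (\<Sum>b\<in>S. l k b *\<^sub>R b))"
      by (rule sum.cong) (auto simp: l(2))
    also have "\<dots> = (\<Sum>b\<in>S. outer (\<Sum>k<r - 1. l k b *\<^sub>R a k) b)" by (rule outer_exchange2)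
    finally show ?thesis .
  qed
  define m where "m = (\<lambda>b. if b \<in> \<sigma> ` {..<r} then e (inv_into {..<r} \<sigma> b) else 0)"
  have lhs: "(\<Sum>i<r. outer (e i) (\<sigma> i)) = (\<Sum>b\<in>S. outer (m b) b)"
  proof -
    have "(\<Sum>b\<in>\<sigma> ` {..<r}. outer (m b) b) = (\<Sum>i<r. outer (m (\<sigma> i)) (\<sigma> i))"
      by (rule sum.reindex[OF sinj, unfolded comp_def])
    also have "\<dots> = (\<Sum>i<r. outer (e i) (\<sigma> i))"
      by (rule sum.cong) (auto simp: m_def inv_into_f_f[OF sinj])
    finally have 1: "(\<Sum>b\<in>\<sigma> ` {..<r}. outer (m b) b) = (\<Sum>i<r. outer (e i) (\<sigma> i))" .
    have "(\<Sum>b\<in>\<sigma> ` {..<r}. outer (m b) b) = (\<Sum>b\<in>S. outer (m b) b)"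
      by (rule sum.mono_neutral_left) (use finS sS in \<open>auto simp: m_def\<close>)
    then show ?thesis using 1 by simp
  qed
  have ei: "e i = (\<Sum>k<r - 1. l k (\<sigma> i) *\<^sub>R a k)" if i: "i < r" for i
  proof -
    have "m (\<sigma> i) = (\<Sum>k<r - 1. l k (\<sigma> i) *\<^sub>R a k)"
      using outer_unique[OF indepS _ sS[OF i], of m "\<lambda>b. \<Sum>k<r - 1. l k b *\<^sub>R a k"] Meq lhs rhs by simp
    moreover have "m (\<sigma> i) = e i" using i by (auto simp: m_def inv_into_f_f[OF sinj])
    ultimately show ?thesis by simp
  qed
  have "\<forall>i. \<exists>k. i < r \<longrightarrow> k < r - 1 \<and> ray (a k) = ray (e i)"
  proof
    fix i show "\<exists>k. i < r \<longrightarrow> k < r - 1 \<and> ray (a k) = ray (e i)"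
    proof (cases "i < r")
      case True
      have face: "ray (e i) face_of order_cone R1"
        using ray_face_of_hull[OF finG orth mgG eG[OF True]] Ghull by simp
      have inray: "l k (\<sigma> i) *\<^sub>R a k \<in> ray (e i)" if k: "k \<in> {..<r - 1}" for k
        by (rule face_ray_sum[OF face finite_lessThan _ ei[OF True] _ _ _ k])
           (use ac(1) l(1) sS[OF True] in \<open>auto intro: order_cone_scale order_cone_add\<close>)
      have ne: "e i \<noteq> 0" using minimal_gen_nonzero[OF mgG eG[OF True]] .
      obtain k where k: "k < r - 1" "l k (\<sigma> i) *\<^sub>R a k \<noteq> 0"
      proof (rule ccontr)
        assume "\<not> thesis"
        then have "\<And>k. k < r - 1 \<Longrightarrow> l k (\<sigma> i) *\<^sub>R a k = 0" using that by blast
        then have "(\<Sum>k<r - 1. l k (\<sigma> i) *\<^sub>R a k) = 0" by (intro sum.neutral) auto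
        then have "e i = 0" using ei[OF True] by simp
        then show False using ne by simp
      qed
      have lpos: "l k (\<sigma> i) > 0" using l(1)[OF k(1) sS[OF True]] k(2) by (cases "l k (\<sigma> i) = 0") auto
      have "ray (l k (\<sigma> i) *\<^sub>R a k) = ray (e i)" using ray_of_member[OF inray k(2)] k(1) by simp
      then have "ray (a k) = ray (e i)" using ray_scale[OF lpos, of "a k"] by simp
      then show ?thesis using k(1) by blast
    qed simp
  qed
  then obtain \<kappa> where \<kappa>: "\<And>i. i < r \<Longrightarrow> \<kappa> i < r - 1 \<and> ray (a (\<kappa> i)) = ray (e i)" by metis
  have "inj_on \<kappa> {..<r}"
  proof (rule inj_onI)
    fix i i' assume i: "i \<in> {..<r}" and i': "i' \<in> {..<r}" and eq: "\<kappa> i = \<kappa> i'"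
    then have "ray (e i) = ray (e i')" using \<kappa> by (metis lessThan_iff)
    then have "e i = e i'" using inj_on_ray[OF finG orth mgG] eG i i' by (auto simp: inj_on_def)
    then show "i = i'" using einj i i' by (auto simp: inj_on_def)
  qed
  moreover have "\<kappa> ` {..<r} \<subseteq> {..<r - 1}" using \<kappa> by auto
  ultimately have "card {..<r} \<le> card {..<r - 1}" by (intro card_inj_on_le) auto
  then show False using r1 by simp
qed



lemma exists_open:
  fixes R1 :: "('a::finite \<times> 'a) set" and R2 :: "('b::finite \<times> 'b) set"
  assumes finG: "finite G" and Ghull: "conical_hull G = order_cone R1" and mgG: "minimal_gen G"
    and indepS: "independent S" and Shull: "conical_hull S = order_cone R2"
    and phi: "bij_betw \<phi> (UNIV::'b set) S"
    and finE: "finite E" and dpos: "\<delta> > 0" and ballE: "ball w \<delta> \<subseteq> conical_hull E"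
    and einj: "inj_on e {..<r}" and eG: "\<And>i. i < r \<Longrightarrow> e i \<in> G" and eE: "\<And>i. i < r \<Longrightarrow> e i \<in> conical_hull E"
    and sinj: "inj_on \<sigma> {..<r}" and sS: "\<And>i. i < r \<Longrightarrow> \<sigma> i \<in> S"
    and r1: "1 \<le> r"
    and hyp: "\<And>x. (\<And>j. x j \<in> conical_hull E) \<Longrightarrow> (\<Sum>j\<in>UNIV. outer (x j) (\<phi> j)) \<in> ND_le R1 R2 r"
  shows "interior (ND_eq R1 R2 r) \<noteq> {}"
proof -
  define Mst where "Mst = (\<Sum>i<r. outer (e i) (\<sigma> i))"
  have notin: "Mst \<notin> ND_le R1 R2 (r - 1)"
    unfolding Mst_def by (rule not_in_lower[OF finG Ghull mgG indepS Shull einj eG sinj sS r1])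
  obtain \<eta> where eta: "\<eta> > 0" "\<And>M. dist M Mst < \<eta> \<Longrightarrow> M \<notin> ND_le R1 R2 (r - 1)"
    using ND_le_avoid_nbhd[OF notin] by blast
  have finS: "finite S" using indepS independent_bound_general by blast
  define m where "m = (\<lambda>b. if b \<in> \<sigma> ` {..<r} then e (inv_into {..<r} \<sigma> b) else 0)"
  have mE: "m b \<in> conical_hull E" for b
    unfolding m_def using eE conical_hull_zero by (auto simp: inv_into_f_f[OF sinj])
  have lhs: "Mst = (\<Sum>b\<in>S. outer (m b) b)"
  proof -
    have "(\<Sum>b\<in>\<sigma> ` {..<r}. outer (m b) b) = (\<Sum>i<r. outer (m (\<sigma> i)) (\<sigma> i))"
      by (rule sum.reindex[OF sinj, unfolded comp_def])
    also have "\<dots> = Mst" unfolding Mst_def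
      by (rule sum.cong) (auto simp: m_def inv_into_f_f[OF sinj])
    finally have 1: "(\<Sum>b\<in>\<sigma> ` {..<r}. outer (m b) b) = Mst" .
    have "(\<Sum>b\<in>\<sigma> ` {..<r}. outer (m b) b) = (\<Sum>b\<in>S. outer (m b) b)"
      by (rule sum.mono_neutral_left) (use finS sS in \<open>auto simp: m_def\<close>)
    then show ?thesis using 1 by simp
  qed
  have reidx: "(\<Sum>j\<in>UNIV. outer (f (\<phi> j)) (\<phi> j)) = (\<Sum>b\<in>S. outer (f b) b)" for f :: "real^'b \<Rightarrow> real^'a"
    using sum.reindex_bij_betw[OF phi, of "\<lambda>b. outer (f b) b"] by simp
  define Lmap where "Lmap = (\<lambda>N::real^'b^'a. \<Sum>j\<in>UNIV. outer (column j N) (\<phi> j))"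
  have lin: "linear Lmap"
    by (rule linearI) (simp_all add: Lmap_def column_add column_scale outer_add_left outer_scale_left
        sum.distrib scaleR_sum_right)
  have invphi: "\<And>j. inv_into UNIV \<phi> (\<phi> j) = j" using phi by (simp add: bij_betw_def inv_into_f_f)
  have phiS: "\<And>j. \<phi> j \<in> S" using phi by (auto simp: bij_betw_def)
  have inj: "inj Lmap"
  proof (rule injI)
    fix N N' assume eq: "Lmap N = Lmap N'"
    let ?f = "\<lambda>N b. column (inv_into UNIV \<phi> b) N"
    have rw: "Lmap N = (\<Sum>b\<in>S. outer (?f N b) b)" for N
    proof -
      have "Lmap N = (\<Sum>j\<in>UNIV. outer (?f N (\<phi> j)) (\<phi> j))"
        unfolding Lmap_def invphi ..
      then show ?thesis using reidx[of "?f N"] by simp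
    qed
    have "(\<Sum>b\<in>S. outer (?f N b) b) = (\<Sum>b\<in>S. outer (?f N' b) b)" using eq rw[of N] rw[of N'] by simp
    then have "?f N (\<phi> j) = ?f N' (\<phi> j)" for j
      by (rule outer_unique[OF indepS _ phiS])
    then have cj: "column j N = column j N'" for j unfolding invphi .
    have "N $ i $ j = N' $ i $ j" for i j
    proof -
      have "column j N $ i = column j N' $ i" using cj by simp
      then show ?thesis by (simp add: column_def)
    qed
    then show "N = N'" by (simp add: vec_eq_iff)
  qed
  have surj: "surj Lmap" by (rule linear_inj_imp_surj[OF lin inj])
  define Nst :: "real^'b^'a" where "Nst = (\<chi> i j. m (\<phi> j) $ i)"
  have colNst: "column j Nst = m (\<phi> j)" for j by (simp add: Nst_def column_def vec_eq_iff)
  define W0 :: "real^'b^'a" where "W0 = (\<chi> i j. w $ i)"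
  have colW0: "column j W0 = w" for j by (simp add: W0_def column_def vec_eq_iff)
  have LNst: "Lmap Nst = Mst" unfolding Lmap_def colNst lhs by (rule reidx)
  define D where "D = Lmap W0"
  define t where "t = \<eta> / (2 * (norm D + 1))"
  have "0 < norm D + 1" by (simp add: add_nonneg_pos)
  then have "2 * (norm D + 1) > 0" by simp
  then have tpos: "t > 0" unfolding t_def using eta(1) by (rule divide_pos_pos[rotated])
  have tD: "t * norm D < \<eta>"
  proof -
    have "t * norm D \<le> t * (norm D + 1)" using tpos by simp
    also have "\<dots> = \<eta> / 2" unfolding t_def using \<open>2 * (norm D + 1) > 0\<close> by (simp add: field_simps)
    also have "\<dots> < \<eta>" using eta(1) by simp
    finally show ?thesis .
  qed
  define Ncen where "Ncen = Nst + t *\<^sub>R W0"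
  define Opn where "Opn = Lmap ` ball Ncen (t * \<delta>) \<inter> ball Mst \<eta>"
  have oO: "open Opn" unfolding Opn_def
    by (intro open_Int open_surjective_linear_image[OF _ lin surj]) simp_all
  have "Lmap Ncen = Mst + t *\<^sub>R D"
    unfolding Ncen_def D_def using LNst linear_add[OF lin] linear_scale[OF lin] by simp
  then have "Lmap Ncen \<in> ball Mst \<eta>" using tpos tD by (simp add: dist_norm)
  moreover have "Lmap Ncen \<in> Lmap ` ball Ncen (t * \<delta>)" using tpos dpos by simp
  ultimately have "Lmap Ncen \<in> Opn" unfolding Opn_def by blast
  then have One: "Opn \<noteq> {}" by blast
  have "Opn \<subseteq> ND_eq R1 R2 r"
  proof
    fix z assume z: "z \<in> Opn"
    then obtain N where N: "z = Lmap N" "dist Ncen N < t * \<delta>" unfolding Opn_def by auto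
    have colE: "column j N \<in> conical_hull E" for j
    proof -
      define v where "v = column j N - m (\<phi> j)"
      have "column j (Ncen - N) = column j Nst + t *\<^sub>R column j W0 - column j N"
        unfolding Ncen_def by (simp add: column_def vec_eq_iff)
      also have "\<dots> = t *\<^sub>R w - v" unfolding v_def colNst colW0 by (simp add: algebra_simps)
      finally have "norm (t *\<^sub>R w - v) = norm (column j (Ncen - N))" by simp
      also have "\<dots> \<le> norm (Ncen - N)" by (rule norm_column_le)
      also have "\<dots> < t * \<delta>" using N(2) by (simp add: dist_norm)
      finally have 1: "norm (t *\<^sub>R w - v) < t * \<delta>" .
      have "dist w ((1/t) *\<^sub>R v) = (1/t) * norm (t *\<^sub>R w - v)"
      proof -
        have "w - (1/t) *\<^sub>R v = (1/t) *\<^sub>R (t *\<^sub>R w - v)" using tpos by (simp add: algebra_simps)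
        then show ?thesis using tpos by (simp add: dist_norm)
      qed
      also have "\<dots> < (1/t) * (t * \<delta>)" using 1 tpos by (intro mult_strict_left_mono) simp_all
      also have "\<dots> = \<delta>" using tpos by simp
      finally have "(1/t) *\<^sub>R v \<in> conical_hull E" using ballE by auto
      then have "t *\<^sub>R ((1/t) *\<^sub>R v) \<in> conical_hull E" by (rule conical_hull_scale) (use tpos in simp)
      then have "v \<in> conical_hull E" using tpos by simp
      then have "m (\<phi> j) + v \<in> conical_hull E" using mE by (simp add: conical_hull_add)
      then show ?thesis unfolding v_def by simp
    qed
    have "z \<in> ND_le R1 R2 r" unfolding N(1) Lmap_def by (rule hyp) (rule colE)
    moreover have "z \<notin> ND_le R1 R2 (r - 1)" using z eta(2) unfolding Opn_def by (auto simp: dist_commute)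
    ultimately show "z \<in> ND_eq R1 R2 r" using r1 unfolding ND_eq_def by auto
  qed
  then have "Opn \<subseteq> interior (ND_eq R1 R2 r)" using oO by (rule interior_maximal)
  then show ?thesis using One by blast
qed



lemma extend_subset:
  assumes fin: "finite G" and BG: "B \<subseteq> G" and le1: "card B \<le> r" and le2: "r \<le> card G"
  obtains E where "B \<subseteq> E" "E \<subseteq> G" "card E = r"
proof -
  have finB: "finite B" using fin BG finite_subset by blast
  have "r - card B \<le> card (G - B)" using card_Diff_subset[OF finB BG] le2 by simp
  then obtain T where T: "T \<subseteq> G - B" "card T = r - card B" "finite T" by (rule obtain_subset_with_card_n)
  have "card (B \<union> T) = card B + card T" using T finB by (intro card_Un_disjoint) auto
  then have "card (B \<union> T) = r" using T(2) le1 by simp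
  moreover have "B \<subseteq> B \<union> T" "B \<union> T \<subseteq> G" using T(1) BG by auto
  ultimately show ?thesis using that by blast
qed

lemma inj_prefix:
  assumes fin: "finite S" and r: "r \<le> card S"
  obtains f where "inj_on f {..<r}" "\<And>i. i < r \<Longrightarrow> f i \<in> S"
proof -
  obtain h where h: "bij_betw h {0..<card S} S" using ex_bij_betw_nat_finite[OF fin] by blast
  have "inj_on h {..<r}" using h r by (auto simp: bij_betw_def intro: inj_on_subset)
  moreover have "\<And>i. i < r \<Longrightarrow> h i \<in> S" using h r by (auto simp: bij_betw_def)
  ultimately show ?thesis using that by blast
qed

theorem corollary1:
  fixes R1 :: "('a::finite \<times> 'a) set" and R2 :: "('b::finite \<times> 'b) set"
    and r q1 q2 :: nat
  assumes "partial_order_on UNIV R1" and "partial_order_on UNIV R2"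
    and "q1 = card (extremal_rays (order_cone R1))"
    and "q2 = card (extremal_rays (order_cone R2))"
    and "simplicial (order_cone R2)"
  shows "typical_ND_rank R1 R2 r \<longleftrightarrow>
           min CARD('a) CARD('b) \<le> r \<and> r \<le> min q1 q2"
proof -
  obtain G :: "(real^'a) set" where G: "finite G" "conical_hull G = order_cone R1" "minimal_gen G"
    by (rule minimal_generating_set)
  have orthG: "orth_cone (conical_hull G)" using G(2) orth_order_cone by simp
  have q1: "q1 = card G" using assms(3) card_extremal_rays_hull[OF G(1) orthG G(3)] G(2) by simp
  obtain S :: "(real^'b) set" where S: "independent S" "finite S" "card S = DIM(real^'b)" "order_cone R2 = conical_hull S"
    using assms(5) unfolding simplicial_def by blast
  have cardS: "card S = CARD('b)" using S(3) by (simp add: DIM_cart)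
  have mgS: "minimal_gen S"
    unfolding minimal_gen_def
  proof (intro ballI notI)
    fix g assume g: "g \<in> S" and "g \<in> conical_hull (S - {g})"
    then have "g \<in> span (S - {g})" using conical_hull_subset_span by blast
    then show False using S(1) g unfolding dependent_def by blast
  qed
  have orthS: "orth_cone (conical_hull S)" using S(4) orth_order_cone by metis
  have q2: "q2 = card S" using assms(4) card_extremal_rays_hull[OF S(2) orthS mgS] S(4) by simp
  have Shull: "conical_hull S = order_cone R2" using S(4) by simp
  have ND0: "ND_le R1 R2 0 = {0}" unfolding ND_le_def by auto
  show ?thesis
  proof
    assume "typical_ND_rank R1 R2 r"
    then have typr: "interior (ND_eq R1 R2 r) \<noteq> {}" unfolding typical_ND_rank_def .
    have r0: "r \<noteq> 0"
    proof
      assume "r = 0"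
      then have "ND_eq R1 R2 r = {0}" unfolding ND_eq_def using ND0 by simp
      then show False using typr by simp
    qed
    have eq: "ND_eq R1 R2 r = ND_le R1 R2 r - ND_le R1 R2 (r - 1)" unfolding ND_eq_def using r0 by simp
    have "interior (ND_le R1 R2 r) \<noteq> {}" using typr interior_mono[of "ND_eq R1 R2 r" "ND_le R1 R2 r"] eq by blast
    then have lo: "min CARD('a) CARD('b) \<le> r" using interior_ND_le_empty[of r R1 R2] by (meson not_le)
    have hi: "r \<le> min q1 q2"
    proof (rule ccontr)
      assume "\<not> r \<le> min q1 q2"
      then have lt: "min (card G) (card S) \<le> r - 1" using q1 q2 by (auto simp: min_def)
      have "ND_le R1 R2 r \<subseteq> ND_le R1 R2 (min (card G) (card S))"
        using ND_le_bound[OF G(1) G(2) S(2) Shull] by (auto simp: min_def)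
      also have "\<dots> \<subseteq> ND_le R1 R2 (r - 1)" using lt by (rule ND_le_mono)
      finally have "ND_eq R1 R2 r = {}" using eq by blast
      then show False using typr by simp
    qed
    show "min CARD('a) CARD('b) \<le> r \<and> r \<le> min q1 q2" using lo hi by simp
  next
    assume bounds: "min CARD('a) CARD('b) \<le> r \<and> r \<le> min q1 q2"
    have "0 < CARD('a)" "0 < CARD('b)" by simp_all
    then have "0 < min CARD('a) CARD('b)" by simp
    then have r1: "1 \<le> r" using bounds by linarith
    have rG: "r \<le> card G" and rS: "r \<le> card S" using bounds q1 q2 by auto
    have spanG: "span G = UNIV" by (rule generators_span[OF assms(1) G(2)])
    obtain B where B: "B \<subseteq> G" "independent B" "card B = CARD('a)" using basis_in_generators[OF spanG] by metis
    obtain \<phi> where phi: "bij_betw \<phi> (UNIV::'b set) S"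
      using finite_same_card_bij[of "UNIV::'b set" S] S(2) cardS by auto
    have phiS: "\<And>j. \<phi> j \<in> S" using phi by (auto simp: bij_betw_def)
    have SC: "S \<subseteq> order_cone R2" using Shull conical_hull_base[OF S(2)] by blast
    have GC: "G \<subseteq> order_cone R1" using G(2) conical_hull_base[OF G(1)] by blast
    obtain \<sigma> where sig: "inj_on \<sigma> {..<r}" "\<And>i. i < r \<Longrightarrow> \<sigma> i \<in> S" using inj_prefix[OF S(2) rS] by metis
    show "typical_ND_rank R1 R2 r"
      unfolding typical_ND_rank_def
    proof (cases "r = CARD('b)")
      case True
      obtain w \<delta> where wd: "\<delta> > 0" "ball w \<delta> \<subseteq> conical_hull G"
        using ball_in_hull[OF B(2) B(3) B(1) G(1)] by blast
      obtain e where e: "inj_on e {..<r}" "\<And>i. i < r \<Longrightarrow> e i \<in> G" using inj_prefix[OF G(1) rG] by metis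
      show "interior (ND_eq R1 R2 r) \<noteq> {}"
      proof (rule exists_open[OF G(1) G(2) G(3) S(1) Shull phi G(1) wd e(1) e(2) _ sig r1])
        show "\<And>i. i < r \<Longrightarrow> e i \<in> conical_hull G" using e(2) conical_hull_base[OF G(1)] by blast
        fix x :: "'b \<Rightarrow> real^'a" assume x: "\<And>j. x j \<in> conical_hull G"
        have "(\<Sum>j\<in>UNIV. outer (x j) (\<phi> j)) \<in> ND_le R1 R2 (card (UNIV::'b set))"
          by (rule ND_le_sum) (use x G(2) phiS SC in auto)
        then show "(\<Sum>j\<in>UNIV. outer (x j) (\<phi> j)) \<in> ND_le R1 R2 r" using True by simp
      qed
    next
      case False
      then have "r < CARD('b)" using rS cardS by simp
      then have "CARD('a) \<le> r" using bounds by (simp add: min_def split: if_splits)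
      then obtain E where E: "B \<subseteq> E" "E \<subseteq> G" "card E = r"
        using extend_subset[OF G(1) B(1) _ rG] B(3) by metis
      have finE: "finite E" using E(2) G(1) finite_subset by blast
      obtain w \<delta> where wd: "\<delta> > 0" "ball w \<delta> \<subseteq> conical_hull E"
        using ball_in_hull[OF B(2) B(3) E(1) finE] by blast
      obtain e where e: "bij_betw e {0..<r} E" using ex_bij_betw_nat_finite[OF finE] E(3) by blast
      have einj: "inj_on e {..<r}" using e by (simp add: bij_betw_def atLeast0LessThan)
      have eE: "\<And>i. i < r \<Longrightarrow> e i \<in> E" using e by (auto simp: bij_betw_def)
      show "interior (ND_eq R1 R2 r) \<noteq> {}"
      proof (rule exists_open[OF G(1) G(2) G(3) S(1) Shull phi finE wd einj _ _ sig r1])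
        show "\<And>i. i < r \<Longrightarrow> e i \<in> G" using eE E(2) by blast
        show "\<And>i. i < r \<Longrightarrow> e i \<in> conical_hull E" using eE conical_hull_base[OF finE] by blast
        fix x :: "'b \<Rightarrow> real^'a" assume x: "\<And>j. x j \<in> conical_hull E"
        have "(\<Sum>j\<in>UNIV. outer (x j) (\<phi> j)) \<in> ND_le R1 R2 (card E)"
          by (rule ND_le_hull_left[OF finite_class.finite_UNIV finE]) (use x E(2) GC phiS SC in auto)
        then show "(\<Sum>j\<in>UNIV. outer (x j) (\<phi> j)) \<in> ND_le R1 R2 r" using E(3) by simp
      qed
    qed
  qed
qed

end
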